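(* There is a constant $C_\circ=C_\circ(b,c_\pm)\ge1$ such that $$|m(\xi_1,\xi_2)-m(\xi_1,0)|\le C_\circ\Big(\frac{|\xi_2|}{|\xi_1|^b}\Big)^{\frac1{2b}}\quad(\xi_1\ne0),\qquad |m(\xi_1,\xi_2)-m(0,\xi_2)|\le C_\circ\Big(\frac{|\xi_1|^b}{|\xi_2|}\Big)^{\frac1{2b}}\quad(\xi_2\ne0).$$
   Context: Fix $b>1$ and nonzero reals $c_+,c_-$. For $\xi=(\xi_1,\xi_2)\in\mathbb R^2\setminus\{0\}$ let $$m(\xi_1,\xi_2)=\lim_{\varepsilon\to0^+,\,R\to\infty}\Big(\int_{\varepsilon<t\le R}e^{-i(t\xi_1+c_+t^b\xi_2)}\frac{dt}t+\int_{-R<t<-\varepsilon}e^{-i(t\xi_1+c_-(-t)^b\xi_2)}\frac{dt}t\Big),$$ the multiplier of the Hilbert transform along the curve $t\mapsto(t,\gamma_b(t))$, $\gamma_b(t)=c_+t^b$ ($t>0$), $c_-(-t)^b$ ($t<0$). *)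

theory Defs
  imports "HOL-Analysis.Analysis"
begin

text \<open>Truncated multiplier: integral over eps < t <= R and -R < t < -eps
  (endpoints are null sets for the integral).\<close>
definition mult_trunc :: "real \<Rightarrow> real \<Rightarrow> real \<Rightarrow> real \<Rightarrow> real \<Rightarrow> real \<Rightarrow> real \<Rightarrow> complex" where
  "mult_trunc b cp cm x1 x2 eps R =
     integral {eps..R} (\<lambda>t. cis (- (t * x1 + cp * t powr b * x2)) / complex_of_real t)
   + integral {-R..-eps} (\<lambda>t. cis (- (t * x1 + cm * (- t) powr b * x2)) / complex_of_real t)"

definition mult_m :: "real \<Rightarrow> real \<Rightarrow> real \<Rightarrow> real \<Rightarrow> real \<Rightarrow> complex" where
  "mult_m b cp cm x1 x2 =
     Lim (at_right 0 \<times>\<^sub>F at_top) (\<lambda>(eps, R). mult_trunc b cp cm x1 x2 eps R)"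

end

theory Submission
  imports Defs
begin

lemma cis_minus_one_bound: "cmod (cis x - 1) \<le> \<bar>x\<bar>"
proof -
  have "(cmod (cis x - 1))\<^sup>2 = (cos x - 1)\<^sup>2 + (sin x)\<^sup>2"
    by (simp add: cmod_power2 cis.code)
  also have "\<dots> = 2 - 2 * cos x" using sin_cos_squared_add[of x] by (simp add: power2_eq_square algebra_simps)
  also have "\<dots> = 4 * (sin (x/2))\<^sup>2" using cos_double_sin[of "x/2"] by simp
  also have "\<dots> \<le> 4 * (x/2)\<^sup>2"
    by (metis abs_sin_x_le_abs_x abs_ge_zero power2_abs power_mono mult_left_mono zero_le_numeral)
  also have "\<dots> = x\<^sup>2" by (simp add: power2_eq_square)
  finally show ?thesis by (metis abs_le_square_iff abs_norm_cancel)
qed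

lemma cis_diff_bound: "cmod (cis a - cis c) \<le> \<bar>a - c\<bar>"
proof -
  have "cis a - cis c = cis c * (cis (a - c) - 1)" by (simp add: algebra_simps cis_mult)
  hence "cmod (cis a - cis c) = cmod (cis (a - c) - 1)" by (simp add: norm_mult)
  thus ?thesis using cis_minus_one_bound by simp
qed

lemma cis_vderiv:
  assumes "(f has_real_derivative f') (at t)"
  shows "((\<lambda>t. cis (f t)) has_vector_derivative (\<i> * complex_of_real f' * cis (f t))) (at t)"
proof -
  have 1: "((\<lambda>t. \<i> * complex_of_real (f t)) has_vector_derivative (\<i> * complex_of_real f')) (at t)"
    using assms by (auto intro!: derivative_eq_intros simp: has_real_derivative_iff_has_vector_derivative[symmetric]
         has_vector_derivative_def has_field_derivative_def fun_eq_iff scaleR_conv_of_real mult_ac)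
  have "((exp \<circ> (\<lambda>t. \<i> * complex_of_real (f t))) has_vector_derivative (\<i> * complex_of_real f') * exp (\<i> * complex_of_real (f t))) (at t)"
    by (rule field_vector_diff_chain_at[OF 1]) (rule DERIV_exp)
  thus ?thesis by (simp add: cis_conv_exp o_def mult.assoc)
qed

lemma norm_sum_le: "(x::complex) = a + b \<Longrightarrow> cmod a \<le> A \<Longrightarrow> cmod b \<le> B \<Longrightarrow> cmod x \<le> A + B"
  using norm_triangle_ineq[of a b] by simp

lemma norm_diff_le: "(x::complex) = a - b \<Longrightarrow> cmod a \<le> A \<Longrightarrow> cmod b \<le> B \<Longrightarrow> cmod x \<le> A + B"
  using norm_triangle_ineq4[of a b] by simp

definition bnd :: "(real \<Rightarrow> complex) \<Rightarrow> real set \<Rightarrow> real \<Rightarrow> bool" where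
  "bnd f S B \<longleftrightarrow> (\<forall>u\<in>S. \<forall>v\<in>S. u \<le> v \<longrightarrow> cmod (integral {u..v} f) \<le> B)"

lemma cont_int:
  fixes f :: "real \<Rightarrow> complex"
  assumes "continuous_on {0<..} f" "0 < u"
  shows "f integrable_on {u..v}"
proof -
  have "{u..v} \<subseteq> {0<..}" using assms(2) by auto
  thus ?thesis using continuous_on_subset[OF assms(1)] integrable_continuous_interval by blast
qed

lemma bnd_nonneg: "bnd f S B \<Longrightarrow> p \<in> S \<Longrightarrow> 0 \<le> B"
proof -
  assume a: "bnd f S B" "p \<in> S"
  have "cmod (integral {p..p} f) \<le> B" using a(1)[unfolded bnd_def, rule_format, OF a(2) a(2) order_refl] .
  thus ?thesis using norm_ge_zero order_trans by blast
qed

lemma bnd_mono: "bnd f T B \<Longrightarrow> S \<subseteq> T \<Longrightarrow> B \<le> B' \<Longrightarrow> bnd f S B'"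
  unfolding bnd_def by (meson order_trans subsetD)

lemma bnd_join:
  assumes cont: "continuous_on {0<..} f" and ST: "S \<subseteq> {0<..}" "T \<subseteq> {0<..}"
    and p: "p \<in> S" "p \<in> T" "\<forall>x\<in>S. x \<le> p" "\<forall>x\<in>T. p \<le> x"
    and b1: "bnd f S B1" and b2: "bnd f T B2"
  shows "bnd f (S \<union> T) (B1 + B2)"
  unfolding bnd_def
proof (intro ballI impI)
  fix u v assume u: "u \<in> S \<union> T" and v: "v \<in> S \<union> T" and uv: "u \<le> v"
  have B1: "0 \<le> B1" using bnd_nonneg[OF b1 p(1)] .
  have B2: "0 \<le> B2" using bnd_nonneg[OF b2 p(2)] .
  have upos: "0 < u" using u ST by auto
  show "cmod (integral {u..v} f) \<le> B1 + B2"
  proof (cases "u \<in> S")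
    case True
    show ?thesis
    proof (cases "v \<in> S")
      case True
      thus ?thesis using b1 \<open>u\<in>S\<close> uv B2 unfolding bnd_def by force
    next
      case False
      hence vT: "v \<in> T" using v by auto
      have up: "u \<le> p" "p \<le> v" using p True vT by auto
      have "integral {u..p} f + integral {p..v} f = integral {u..v} f"
        by (rule Henstock_Kurzweil_Integration.integral_combine) (use up cont_int[OF cont upos] in auto)
      moreover have "cmod (integral {u..p} f) \<le> B1" using b1 True p unfolding bnd_def using up by auto
      moreover have "cmod (integral {p..v} f) \<le> B2" using b2 vT p unfolding bnd_def using up by auto
      ultimately show ?thesis by (intro norm_sum_le) auto
    qed
  next
    case False
    hence uT: "u \<in> T" using u by auto
    show ?thesis
    proof (cases "v \<in> T")
      case True
      thus ?thesis using b2 uT uv B1 unfolding bnd_def by force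
    next
      case False
      hence "v \<in> S" using v by auto
      hence "u = v" using p uT uv by force
      thus ?thesis using B1 B2 by simp
    qed
  qed
qed

lemma bnd_diff:
  assumes "continuous_on {0<..} f" "continuous_on {0<..} g" "S \<subseteq> {0<..}"
    "bnd f S B1" "bnd g S B2"
  shows "bnd (\<lambda>t. f t - g t) S (B1 + B2)"
  unfolding bnd_def
proof (intro ballI impI)
  fix u v assume uv: "u \<in> S" "v \<in> S" "u \<le> v"
  hence "0 < u" using assms by auto
  hence "integral {u..v} (\<lambda>t. f t - g t) = integral {u..v} f - integral {u..v} g"
    by (intro integral_diff cont_int assms)
  moreover have "cmod (integral {u..v} f) \<le> B1" "cmod (integral {u..v} g) \<le> B2"
    using assms(4,5) uv unfolding bnd_def by auto
  ultimately show "cmod (integral {u..v} (\<lambda>t. f t - g t)) \<le> B1 + B2"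
    by (intro norm_diff_le) auto
qed

lemma bnd_add:
  assumes "continuous_on {0<..} f" "continuous_on {0<..} g" "S \<subseteq> {0<..}"
    "bnd f S B1" "bnd g S B2"
  shows "bnd (\<lambda>t. f t + g t) S (B1 + B2)"
  unfolding bnd_def
proof (intro ballI impI)
  fix u v assume uv: "u \<in> S" "v \<in> S" "u \<le> v"
  hence "0 < u" using assms by auto
  hence "integral {u..v} (\<lambda>t. f t + g t) = integral {u..v} f + integral {u..v} g"
    by (intro integral_add cont_int assms)
  moreover have "cmod (integral {u..v} f) \<le> B1" "cmod (integral {u..v} g) \<le> B2"
    using assms(4,5) uv unfolding bnd_def by auto
  ultimately show "cmod (integral {u..v} (\<lambda>t. f t + g t)) \<le> B1 + B2"
    by (intro norm_sum_le) auto
qed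

lemma bnd_cong:
  assumes "\<And>t. 0 < t \<Longrightarrow> f t = g t" "S \<subseteq> {0<..}" "bnd g S B"
  shows "bnd f S B"
  unfolding bnd_def
proof (intro ballI impI)
  fix u v assume uv: "u \<in> S" "v \<in> S" "u \<le> v"
  hence "0 < u" using assms by auto
  hence "integral {u..v} f = integral {u..v} g"
    by (intro integral_cong) (use assms in auto)
  thus "cmod (integral {u..v} f) \<le> B" using assms(3) uv unfolding bnd_def by auto
qed

lemma bnd_antider:
  assumes S: "S \<subseteq> {0<..}" "\<forall>u\<in>S. \<forall>v\<in>S. {u..v} \<subseteq> S"
    and cont: "continuous_on {0<..} f"
    and fg: "\<And>t. t \<in> S \<Longrightarrow> cmod (f t) \<le> g t"
    and dG: "\<And>t. t \<in> S \<Longrightarrow> (G has_real_derivative g t) (at t)"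
    and GB: "\<And>u v. u \<in> S \<Longrightarrow> v \<in> S \<Longrightarrow> u \<le> v \<Longrightarrow> G v - G u \<le> B"
  shows "bnd f S B"
  unfolding bnd_def
proof (intro ballI impI)
  fix u v assume uv: "u \<in> S" "v \<in> S" "u \<le> v"
  hence sub: "{u..v} \<subseteq> S" using S by auto
  have "0 < u" using uv S by auto
  have gi: "(g has_integral G v - G u) {u..v}"
  proof (rule fundamental_theorem_of_calculus[OF uv(3)])
    fix x assume "x \<in> {u..v}"
    hence "x \<in> S" using sub by auto
    thus "(G has_vector_derivative g x) (at x within {u..v})"
      using dG[of x] by (auto simp: has_real_derivative_iff_has_vector_derivative intro: has_vector_derivative_at_within)
  qed
  have "cmod (integral {u..v} f) \<le> integral {u..v} g"
    by (rule integral_norm_bound_integral) (use cont_int[OF cont \<open>0<u\<close>] gi fg sub in auto)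
  also have "\<dots> = G v - G u" using gi by (simp add: has_integral_iff)
  also have "\<dots> \<le> B" using GB uv by auto
  finally show "cmod (integral {u..v} f) \<le> B" .
qed

lemma ibp_core:
  fixes \<phi> \<psi> \<psi>' :: "real \<Rightarrow> real"
  assumes u: "0 < u" "u \<le> v" and m: "0 < m"
    and dphi: "\<And>t. t \<in> {u..v} \<Longrightarrow> (\<phi> has_real_derivative \<psi> t / t) (at t)"
    and dpsi: "\<And>t. t \<in> {u..v} \<Longrightarrow> (\<psi> has_real_derivative \<psi>' t) (at t)"
    and cpsi': "continuous_on {u..v} \<psi>'"
    and mpsi: "\<And>t. t \<in> {u..v} \<Longrightarrow> m \<le> \<bar>\<psi> t\<bar>"
    and sgn: "(\<forall>t\<in>{u..v}. 0 \<le> \<psi>' t) \<or> (\<forall>t\<in>{u..v}. \<psi>' t \<le> 0)"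
  shows "cmod (integral {u..v} (\<lambda>t. cis (\<phi> t) / complex_of_real t)) \<le> 4 / m"
proof -
  have psinz: "\<psi> t \<noteq> 0" if "t \<in> {u..v}" for t using mpsi[OF that] m by auto
  define h where "h t = 1 / \<psi> t" for t
  define h' where "h' t = - \<psi>' t / (\<psi> t * \<psi> t)" for t
  have dh: "(h has_real_derivative h' t) (at t)" if "t \<in> {u..v}" for t
  proof -
    have "((\<lambda>t. 1 / \<psi> t) has_real_derivative (0 * \<psi> t - 1 * \<psi>' t) / (\<psi> t * \<psi> t)) (at t)"
      by (rule DERIV_divide) (use dpsi[OF that] psinz[OF that] in auto)
    thus ?thesis unfolding h_def h'_def by simp
  qed
  have cphi: "continuous_on {u..v} \<phi>"
    by (rule continuous_at_imp_continuous_on) (use dphi DERIV_continuous in blast)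
  have cpsi: "continuous_on {u..v} \<psi>"
    by (rule continuous_at_imp_continuous_on) (use dpsi DERIV_continuous in blast)
  have ch': "continuous_on {u..v} h'"
    unfolding h'_def by (intro continuous_intros cpsi cpsi') (use psinz in auto)
  define g where "g t = cis (\<phi> t) * complex_of_real (h' t)" for t
  have cg: "continuous_on {u..v} g"
    unfolding g_def cis_conv_exp by (intro continuous_intros cphi ch')
  define H where "H t = cis (\<phi> t) * complex_of_real (h t)" for t
  define H' where "H' t = \<i> * complex_of_real (\<psi> t / t) * cis (\<phi> t) * complex_of_real (h t) + g t" for t
  have dH: "(H has_vector_derivative H' t) (at t within {u..v})" if "t \<in> {u..v}" for t
  proof -
    have "((\<lambda>t. cis (\<phi> t) * complex_of_real (h t)) has_vector_derivative
        (cis (\<phi> t) * complex_of_real (h' t) + (\<i> * complex_of_real (\<psi> t / t) * cis (\<phi> t)) * complex_of_real (h t))) (at t)"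
      by (rule has_vector_derivative_mult) (use cis_vderiv[OF dphi[OF that]] has_vector_derivative_of_real[OF dh[OF that]] in auto)
    moreover have "cis (\<phi> t) * complex_of_real (h' t) + (\<i> * complex_of_real (\<psi> t / t) * cis (\<phi> t)) * complex_of_real (h t) = H' t"
      unfolding H'_def g_def by (simp add: add.commute)
    ultimately show ?thesis unfolding H_def by (metis has_vector_derivative_at_within)
  qed
  have H'eq: "H' t = \<i> * (cis (\<phi> t) / complex_of_real t) + g t" if "t \<in> {u..v}" for t
  proof -
    have "\<psi> t / t * (1 / \<psi> t) = 1 / t" using psinz[OF that] by simp
    hence "complex_of_real (\<psi> t / t) * complex_of_real (1 / \<psi> t) = 1 / complex_of_real t"
      by (metis of_real_mult of_real_divide of_real_1)
    hence "\<i> * complex_of_real (\<psi> t / t) * cis (\<phi> t) * complex_of_real (1 / \<psi> t) = \<i> * (cis (\<phi> t) / complex_of_real t)"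
    proof -
      assume e: "complex_of_real (\<psi> t / t) * complex_of_real (1 / \<psi> t) = 1 / complex_of_real t"
      have "\<i> * complex_of_real (\<psi> t / t) * cis (\<phi> t) * complex_of_real (1 / \<psi> t)
          = \<i> * cis (\<phi> t) * (complex_of_real (\<psi> t / t) * complex_of_real (1 / \<psi> t))"
        by (simp only: mult_ac)
      also have "\<dots> = \<i> * (cis (\<phi> t) / complex_of_real t)" unfolding e by simp
      finally show ?thesis .
    qed
    thus ?thesis unfolding H'_def h_def by simp
  qed
  have Hint: "(H' has_integral H v - H u) {u..v}"
    by (rule fundamental_theorem_of_calculus[OF u(2) dH])
  have gint: "g integrable_on {u..v}" by (rule integrable_continuous_interval[OF cg])
  have eq: "cis (\<phi> t) / complex_of_real t = - \<i> * (H' t - g t)" if "t \<in> {u..v}" for t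
    using H'eq[OF that] by (simp add: algebra_simps)
  have "integral {u..v} (\<lambda>t. cis (\<phi> t) / complex_of_real t) = integral {u..v} (\<lambda>t. - \<i> * (H' t - g t))"
    by (rule integral_cong) (use eq in auto)
  also have "\<dots> = - \<i> * ((H v - H u) - integral {u..v} g)"
  proof -
    have "((\<lambda>t. - \<i> * (H' t - g t)) has_integral - \<i> * ((H v - H u) - integral {u..v} g)) {u..v}"
      by (intro has_integral_mult_right has_integral_diff Hint integrable_integral gint)
    thus ?thesis by (simp add: has_integral_iff)
  qed
  finally have I: "integral {u..v} (\<lambda>t. cis (\<phi> t) / complex_of_real t) = - \<i> * ((H v - H u) - integral {u..v} g)" .
  have nH: "cmod (H t) \<le> 1 / m" if "t \<in> {u..v}" for t
  proof -
    have "cmod (H t) = 1 / \<bar>\<psi> t\<bar>" unfolding H_def h_def by (simp add: norm_mult norm_divide)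
    also have "\<dots> \<le> 1 / m" using mpsi[OF that] m by (intro divide_left_mono) auto
    finally show ?thesis .
  qed
  have hbound: "\<bar>h t\<bar> \<le> 1 / m" if "t \<in> {u..v}" for t
    using nH[OF that] unfolding H_def by (simp add: norm_mult)
  have hint: "(h' has_integral h v - h u) {u..v}"
    by (rule fundamental_theorem_of_calculus[OF u(2)])
       (use dh in \<open>auto simp: has_real_derivative_iff_has_vector_derivative intro: has_vector_derivative_at_within\<close>)
  obtain s :: real where s: "s = 1 \<or> s = -1" "\<And>t. t \<in> {u..v} \<Longrightarrow> \<bar>h' t\<bar> \<le> s * h' t"
  proof (cases "\<forall>t\<in>{u..v}. 0 \<le> \<psi>' t")
    case True
    have "\<bar>h' t\<bar> \<le> (-1) * h' t" if "t \<in> {u..v}" for t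
      using True that unfolding h'_def by (auto simp: abs_if divide_nonneg_nonneg)
    thus ?thesis using that by blast
  next
    case False
    hence "\<forall>t\<in>{u..v}. \<psi>' t \<le> 0" using sgn by blast
    hence "\<bar>h' t\<bar> \<le> 1 * h' t" if "t \<in> {u..v}" for t
      using that unfolding h'_def by (auto simp: abs_if divide_nonpos_nonneg)
    thus ?thesis using that by blast
  qed
  have sh: "((\<lambda>t. s * h' t) has_integral s * (h v - h u)) {u..v}"
    using has_integral_mult_right[OF hint] .
  have "cmod (integral {u..v} g) \<le> integral {u..v} (\<lambda>t. s * h' t)"
  proof (rule integral_norm_bound_integral[OF gint])
    show "(\<lambda>t. s * h' t) integrable_on {u..v}" using sh by (rule has_integral_integrable)
    fix x assume "x \<in> {u..v}"
    thus "cmod (g x) \<le> s * h' x" using s(2)[of x] unfolding g_def by (simp add: norm_mult)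
  qed
  also have "\<dots> = s * (h v - h u)" using sh by (simp add: has_integral_iff)
  also have "\<dots> \<le> 2 / m"
    using hbound[of u] hbound[of v] u s(1) by (auto simp: abs_le_iff)
  finally have gI: "cmod (integral {u..v} g) \<le> 2 / m" .
  have "cmod (integral {u..v} (\<lambda>t. cis (\<phi> t) / complex_of_real t)) = cmod ((H v - H u) - integral {u..v} g)"
    unfolding I by (simp add: norm_mult)
  also have "\<dots> \<le> cmod (H v) + cmod (H u) + cmod (integral {u..v} g)"
    using norm_triangle_ineq4[of "H v - H u" "integral {u..v} g"] norm_triangle_ineq4[of "H v" "H u"] by simp
  also have "\<dots> \<le> 1/m + 1/m + 2/m" using nH[of u] nH[of v] u gI by (intro add_mono) auto
  finally show ?thesis by simp
qed

definition Kf :: "real \<Rightarrow> real \<Rightarrow> real \<Rightarrow> real \<Rightarrow> complex" where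
  "Kf b \<alpha> \<gamma> t = cis (- (t * \<alpha> + \<gamma> * t powr b)) / complex_of_real t"

lemma Kf_cont: "continuous_on {0<..} (Kf b \<alpha> \<gamma>)"
  unfolding Kf_def cis_conv_exp by (intro continuous_intros) auto

lemma Kf_cont2: "continuous_on {0<..} (\<lambda>t. Kf b \<alpha> \<gamma> t - Kf b \<alpha>' \<gamma>' t)"
  by (intro continuous_intros Kf_cont[unfolded continuous_on_eq_continuous_within]
       continuous_on_diff Kf_cont)

lemma powr_b_split: "0 < (t::real) \<Longrightarrow> t powr b = t * t powr (b - 1)"
  by (simp add: powr_diff)

lemma Kf_norm: "0 < t \<Longrightarrow> cmod (Kf b \<alpha> \<gamma> t) = 1 / t"
  unfolding Kf_def by (simp add: norm_divide)

lemma Kf_pt_diff: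
  assumes "0 < t"
  shows "cmod (Kf b \<alpha> \<gamma> t - Kf b \<alpha>' \<gamma>' t) \<le> \<bar>\<alpha> - \<alpha>'\<bar> + \<bar>\<gamma> - \<gamma>'\<bar> * t powr (b - 1)"
proof -
  have "Kf b \<alpha> \<gamma> t - Kf b \<alpha>' \<gamma>' t = (cis (- (t * \<alpha> + \<gamma> * t powr b)) - cis (- (t * \<alpha>' + \<gamma>' * t powr b))) / complex_of_real t"
    unfolding Kf_def by (simp add: diff_divide_distrib)
  hence "cmod (Kf b \<alpha> \<gamma> t - Kf b \<alpha>' \<gamma>' t) = cmod (cis (- (t * \<alpha> + \<gamma> * t powr b)) - cis (- (t * \<alpha>' + \<gamma>' * t powr b))) / t"
    using assms by (simp add: norm_divide)
  also have "\<dots> \<le> \<bar>(- (t * \<alpha> + \<gamma> * t powr b)) - (- (t * \<alpha>' + \<gamma>' * t powr b))\<bar> / t"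
    using assms by (intro divide_right_mono cis_diff_bound) auto
  also have "\<bar>(- (t * \<alpha> + \<gamma> * t powr b)) - (- (t * \<alpha>' + \<gamma>' * t powr b))\<bar> = \<bar>t * (\<alpha> - \<alpha>') + (\<gamma> - \<gamma>') * t powr b\<bar>"
    by (simp add: algebra_simps)
  also have "\<dots> \<le> t * \<bar>\<alpha> - \<alpha>'\<bar> + \<bar>\<gamma> - \<gamma>'\<bar> * t powr b"
    using assms by (metis abs_mult abs_of_pos abs_triangle_ineq powr_ge_zero abs_of_nonneg)
  also have "(t * \<bar>\<alpha> - \<alpha>'\<bar> + \<bar>\<gamma> - \<gamma>'\<bar> * t powr b) / t = \<bar>\<alpha> - \<alpha>'\<bar> + \<bar>\<gamma> - \<gamma>'\<bar> * t powr (b - 1)"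
    using assms by (simp add: powr_b_split[OF assms, of b] field_simps)
  finally show ?thesis using assms by (simp add: divide_right_mono)
qed

lemma Kf_ibp:
  assumes b: "b > 1" and S: "S \<subseteq> {0<..}" "\<forall>u\<in>S. \<forall>v\<in>S. {u..v} \<subseteq> S" and m: "m > 0"
    and mb: "\<And>t. t \<in> S \<Longrightarrow> m \<le> \<bar>\<alpha> * t + b * \<gamma> * t powr b\<bar>"
    and sg: "(\<forall>t\<in>S. 0 \<le> \<alpha> + b * b * \<gamma> * t powr (b - 1)) \<or> (\<forall>t\<in>S. \<alpha> + b * b * \<gamma> * t powr (b - 1) \<le> 0)"
  shows "bnd (Kf b \<alpha> \<gamma>) S (4 / m)"
  unfolding bnd_def
proof (intro ballI impI)
  fix u v assume uv: "u \<in> S" "v \<in> S" "u \<le> v"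
  have sub: "{u..v} \<subseteq> S" using S uv by auto
  have u0: "0 < u" using uv S by auto
  define \<phi> where "\<phi> t = - (t * \<alpha> + \<gamma> * t powr b)" for t
  define \<psi> where "\<psi> t = - (\<alpha> * t + b * \<gamma> * t powr b)" for t
  define \<psi>' where "\<psi>' t = - (\<alpha> + b * b * \<gamma> * t powr (b - 1))" for t
  have pos: "0 < t" if "t \<in> {u..v}" for t using that u0 by auto
  have "cmod (integral {u..v} (\<lambda>t. cis (\<phi> t) / complex_of_real t)) \<le> 4 / m"
  proof (rule ibp_core[OF u0 uv(3) m])
    fix t assume t: "t \<in> {u..v}"
    have t0: "0 < t" using pos[OF t] .
    have d1: "((\<lambda>t. t powr b) has_real_derivative b * t powr (b - 1)) (at t)"
      by (rule has_real_derivative_powr[OF t0])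
    have "(\<phi> has_real_derivative - (1 * \<alpha> + \<gamma> * (b * t powr (b - 1)))) (at t)"
      unfolding \<phi>_def by (intro DERIV_minus DERIV_add DERIV_cmult_right DERIV_cmult DERIV_ident d1)
    moreover have "- (1 * \<alpha> + \<gamma> * (b * t powr (b - 1))) = \<psi> t / t"
      unfolding \<psi>_def using t0 by (simp add: powr_b_split[OF t0, of b] field_simps)
    ultimately show "(\<phi> has_real_derivative \<psi> t / t) (at t)" by simp
    have "(\<psi> has_real_derivative - (\<alpha> * 1 + b * \<gamma> * (b * t powr (b - 1)))) (at t)"
      unfolding \<psi>_def by (intro DERIV_minus DERIV_add DERIV_cmult_right DERIV_cmult DERIV_ident d1)
    thus "(\<psi> has_real_derivative \<psi>' t) (at t)" unfolding \<psi>'_def by (simp add: algebra_simps)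
    show "m \<le> \<bar>\<psi> t\<bar>" using mb[of t] sub t unfolding \<psi>_def by auto
  next
    show "continuous_on {u..v} \<psi>'" unfolding \<psi>'_def
      by (intro continuous_intros) (use u0 in auto)
  next
    show "(\<forall>t\<in>{u..v}. 0 \<le> \<psi>' t) \<or> (\<forall>t\<in>{u..v}. \<psi>' t \<le> 0)"
      using sg sub unfolding \<psi>'_def by force
  qed
  moreover have "Kf b \<alpha> \<gamma> = (\<lambda>t. cis (\<phi> t) / complex_of_real t)"
    unfolding Kf_def \<phi>_def by auto
  ultimately show "cmod (integral {u..v} (Kf b \<alpha> \<gamma>)) \<le> 4 / m" by simp
qed

lemma bnd_small:
  assumes b: "b > 1" and a: "a > 0"
  shows "bnd (\<lambda>t. Kf b \<alpha> \<gamma> t - Kf b \<alpha>' \<gamma>' t) {0<..a} ((\<bar>\<alpha> - \<alpha>'\<bar> + \<bar>\<gamma> - \<gamma>'\<bar> * a powr (b - 1)) * a)"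
proof -
  define M where "M = \<bar>\<alpha> - \<alpha>'\<bar> + \<bar>\<gamma> - \<gamma>'\<bar> * a powr (b - 1)"
  have M0: "0 \<le> M" unfolding M_def by simp
  show ?thesis unfolding M_def[symmetric]
  proof (rule bnd_antider[where g = "\<lambda>_. M" and G = "\<lambda>t. M * t"])
    show "continuous_on {0<..} (\<lambda>t. Kf b \<alpha> \<gamma> t - Kf b \<alpha>' \<gamma>' t)" by (rule Kf_cont2)
  next
    fix t assume t: "t \<in> {0<..a}"
    have "t powr (b - 1) \<le> a powr (b - 1)" using t b by (intro powr_mono2) auto
    hence "\<bar>\<gamma> - \<gamma>'\<bar> * t powr (b - 1) \<le> \<bar>\<gamma> - \<gamma>'\<bar> * a powr (b - 1)" by (simp add: mult_left_mono)
    thus "cmod (Kf b \<alpha> \<gamma> t - Kf b \<alpha>' \<gamma>' t) \<le> M"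
      using Kf_pt_diff[of t b \<alpha> \<gamma> \<alpha>' \<gamma>'] t unfolding M_def by auto
    show "((\<lambda>t. M * t) has_real_derivative M) (at t)"
      using DERIV_cmult[OF DERIV_ident, of M] by simp
  next
    fix u v assume "u \<in> {0<..a}" "v \<in> {0<..a}" "u \<le> v"
    hence "M * v \<le> M * a" "0 \<le> M * u" using M0 by (auto simp: mult_left_mono)
    thus "M * v - M * u \<le> M * a" by linarith
  qed auto
qed

lemma bnd_log:
  assumes "0 < A" "A \<le> B"
  shows "bnd (Kf b \<alpha> \<gamma>) {A..B} (ln B - ln A)"
proof (rule bnd_antider[where g = "\<lambda>t. 1 / t" and G = ln])
  show "continuous_on {0<..} (Kf b \<alpha> \<gamma>)" by (rule Kf_cont)
next
  fix t assume t: "t \<in> {A..B}"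
  hence "0 < t" using assms by auto
  thus "cmod (Kf b \<alpha> \<gamma> t) \<le> 1 / t" by (simp add: Kf_norm)
  show "(ln has_real_derivative 1 / t) (at t)" using \<open>0 < t\<close> DERIV_ln_divide by blast
next
  fix u v assume "u \<in> {A..B}" "v \<in> {A..B}" "u \<le> v"
  hence "ln v \<le> ln B" "ln A \<le> ln u" using assms by auto
  thus "ln v - ln u \<le> ln B - ln A" by linarith
qed (use assms in auto)

lemma C_lin:
  assumes b: "b > 1" and al: "\<alpha> \<noteq> 0" "0 \<le> \<alpha> * \<gamma>" and A: "A > 0"
  shows "bnd (Kf b \<alpha> \<gamma>) {A..} (4 / (\<bar>\<alpha>\<bar> * A))"
proof (rule Kf_ibp[OF b])
  show "0 < \<bar>\<alpha>\<bar> * A" using al A by auto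
next
  fix t assume t: "t \<in> {A..}"
  have t0: "0 < t" using t A by auto
  have P: "0 \<le> t powr b" "0 \<le> t powr (b - 1)" by auto
  show "\<bar>\<alpha>\<bar> * A \<le> \<bar>\<alpha> * t + b * \<gamma> * t powr b\<bar>"
  proof (cases "\<alpha> > 0")
    case True
    hence "0 \<le> \<gamma>" using al(2) by (simp add: zero_le_mult_iff)
    hence "0 \<le> b * \<gamma> * t powr b" using b P by simp
    moreover have "\<alpha> * A \<le> \<alpha> * t" using True t by simp
    moreover have "\<alpha> * t + b * \<gamma> * t powr b \<le> \<bar>\<alpha> * t + b * \<gamma> * t powr b\<bar>" by (rule abs_ge_self)
    ultimately have "\<alpha> * A \<le> \<bar>\<alpha> * t + b * \<gamma> * t powr b\<bar>" by linarith
    thus ?thesis using True by simp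
  next
    case False
    hence an: "\<alpha> < 0" using al by simp
    hence "\<gamma> \<le> 0" using al(2) by (simp add: zero_le_mult_iff)
    hence "b * \<gamma> * t powr b \<le> 0" using b P by (simp add: mult_nonneg_nonpos mult_nonpos_nonneg)
    moreover have "\<alpha> * t \<le> \<alpha> * A" using an t by simp
    moreover have "- (\<alpha> * t + b * \<gamma> * t powr b) \<le> \<bar>\<alpha> * t + b * \<gamma> * t powr b\<bar>" by (rule abs_ge_minus_self)
    ultimately have "- (\<alpha> * A) \<le> \<bar>\<alpha> * t + b * \<gamma> * t powr b\<bar>" by linarith
    thus ?thesis using an by simp
  qed
next
  show "(\<forall>t\<in>{A..}. 0 \<le> \<alpha> + b * b * \<gamma> * t powr (b - 1)) \<or> (\<forall>t\<in>{A..}. \<alpha> + b * b * \<gamma> * t powr (b - 1) \<le> 0)"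
  proof (cases "\<alpha> > 0")
    case True
    hence "0 \<le> \<gamma>" using al(2) by (simp add: zero_le_mult_iff)
    thus ?thesis using True b by auto
  next
    case False
    hence an: "\<alpha> < 0" using al by simp
    hence "\<gamma> \<le> 0" using al(2) by (simp add: zero_le_mult_iff)
    hence *: "\<forall>t\<in>{A..}. b * b * \<gamma> * t powr (b - 1) \<le> 0" using b
      by (auto simp: mult_nonneg_nonpos mult_nonpos_nonneg)
    have "\<forall>t\<in>{A..}. \<alpha> + b * b * \<gamma> * t powr (b - 1) \<le> 0"
    proof
      fix t assume "t \<in> {A..}"
      with * have "b * b * \<gamma> * t powr (b - 1) \<le> 0" by auto
      with an show "\<alpha> + b * b * \<gamma> * t powr (b - 1) \<le> 0" by linarith
    qed
    thus ?thesis ..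
  qed
qed (use A in auto)

lemma C_far:
  assumes b: "b > 1" and g: "\<gamma> \<noteq> 0" and A: "A > 0" and far: "\<bar>\<alpha>\<bar> \<le> \<bar>\<gamma>\<bar> * A powr (b - 1)"
  shows "bnd (Kf b \<alpha> \<gamma>) {A..} (4 / ((b - 1) * \<bar>\<gamma>\<bar> * A powr b))"
proof -
  have farT: "\<bar>\<alpha>\<bar> \<le> \<bar>\<gamma>\<bar> * t powr (b - 1)" if t: "t \<in> {A..}" for t
  proof -
    have P1: "A powr (b - 1) \<le> t powr (b - 1)" using t A b by (intro powr_mono2) auto
    have "\<bar>\<gamma>\<bar> * A powr (b - 1) \<le> \<bar>\<gamma>\<bar> * t powr (b - 1)" using P1 by (rule mult_left_mono) simp
    thus ?thesis using far by linarith
  qed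
  show ?thesis
  proof (rule Kf_ibp[OF b])
    show "0 < (b - 1) * \<bar>\<gamma>\<bar> * A powr b" using b g A by auto
  next
    fix t assume t: "t \<in> {A..}"
    have t0: "0 < t" using t A by auto
    have Pb: "A powr b \<le> t powr b" using t A b by (intro powr_mono2) auto
    have split: "t powr b = t * t powr (b - 1)" by (rule powr_b_split[OF t0])
    have "\<bar>\<alpha>\<bar> * t \<le> \<bar>\<gamma>\<bar> * t powr (b - 1) * t" by (intro mult_right_mono farT[OF t]) (use t0 in auto)
    hence X: "\<bar>\<alpha> * t\<bar> \<le> \<bar>\<gamma>\<bar> * t powr b" using t0 unfolding split by (simp add: abs_mult mult_ac)
    have Y: "\<bar>b * \<gamma> * t powr b\<bar> = b * (\<bar>\<gamma>\<bar> * t powr b)" using b by (simp add: abs_mult)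
    have T: "\<bar>b * \<gamma> * t powr b\<bar> \<le> \<bar>\<alpha> * t + b * \<gamma> * t powr b\<bar> + \<bar>\<alpha> * t\<bar>"
      using abs_triangle_ineq[of "\<alpha> * t + b * \<gamma> * t powr b" "- (\<alpha> * t)"] by simp
    have "(b - 1) * \<bar>\<gamma>\<bar> * t powr b = b * (\<bar>\<gamma>\<bar> * t powr b) - \<bar>\<gamma>\<bar> * t powr b" by (simp add: algebra_simps)
    hence 1: "(b - 1) * \<bar>\<gamma>\<bar> * t powr b \<le> \<bar>\<alpha> * t + b * \<gamma> * t powr b\<bar>" using X Y T by linarith
    have "(b - 1) * \<bar>\<gamma>\<bar> * A powr b \<le> (b - 1) * \<bar>\<gamma>\<bar> * t powr b"
      using Pb b by (intro mult_left_mono) auto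
    thus "(b - 1) * \<bar>\<gamma>\<bar> * A powr b \<le> \<bar>\<alpha> * t + b * \<gamma> * t powr b\<bar>" using 1 by linarith
  next
    have key: "\<bar>\<alpha>\<bar> \<le> b * b * \<bar>\<gamma>\<bar> * t powr (b - 1)" if t: "t \<in> {A..}" for t
    proof -
      have bb: "1 \<le> b * b" using b mult_mono[of 1 b 1 b] by simp
      have nn: "0 \<le> \<bar>\<gamma>\<bar> * t powr (b - 1)" by simp
      have "\<bar>\<gamma>\<bar> * t powr (b - 1) \<le> (b * b) * (\<bar>\<gamma>\<bar> * t powr (b - 1))"
        using mult_right_mono[OF bb nn] by simp
      thus ?thesis using farT[OF t] by (simp add: mult.assoc)
    qed
    show "(\<forall>t\<in>{A..}. 0 \<le> \<alpha> + b * b * \<gamma> * t powr (b - 1)) \<or> (\<forall>t\<in>{A..}. \<alpha> + b * b * \<gamma> * t powr (b - 1) \<le> 0)"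
    proof (cases "\<gamma> > 0")
      case True
      have "\<forall>t\<in>{A..}. 0 \<le> \<alpha> + b * b * \<gamma> * t powr (b - 1)"
      proof
        fix t assume "t \<in> {A..}"
        from key[OF this] True show "0 \<le> \<alpha> + b * b * \<gamma> * t powr (b - 1)" by (simp add: abs_le_iff)
      qed
      thus ?thesis ..
    next
      case False
      hence gn: "\<gamma> < 0" using g by simp
      have "\<forall>t\<in>{A..}. \<alpha> + b * b * \<gamma> * t powr (b - 1) \<le> 0"
      proof
        fix t assume "t \<in> {A..}"
        from key[OF this] gn show "\<alpha> + b * b * \<gamma> * t powr (b - 1) \<le> 0" by (simp add: abs_le_iff)
      qed
      thus ?thesis ..
    qed
  qed (use A in auto)
qed

lemma u_le:
  fixes p t t0 c :: real
  assumes p: "p > 0" and t: "0 < t" and t0: "0 < t0" and c: "0 < c" and le: "t \<le> t0 * c powr (1 / p)"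
  shows "(t / t0) powr p \<le> c"
proof -
  have "t / t0 \<le> c powr (1 / p)" using le t0 by (simp add: divide_le_eq mult.commute)
  hence "(t / t0) powr p \<le> (c powr (1 / p)) powr p" using p t t0 by (intro powr_mono2) auto
  also have "\<dots> = c" using p c by (simp add: powr_powr)
  finally show ?thesis .
qed

lemma u_ge:
  fixes p t t0 c :: real
  assumes p: "p > 0" and t: "0 < t" and t0: "0 < t0" and c: "0 < c" and le: "t0 * c powr (1 / p) \<le> t"
  shows "c \<le> (t / t0) powr p"
proof -
  have "c powr (1 / p) \<le> t / t0" using le t0 by (simp add: le_divide_eq mult.commute)
  hence "(c powr (1 / p)) powr p \<le> (t / t0) powr p" using p t t0 by (intro powr_mono2) auto
  moreover have "(c powr (1 / p)) powr p = c" using p c by (simp add: powr_powr)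
  ultimately show ?thesis by simp
qed

lemma stat_expr:
  fixes b t t0 \<kappa> :: real
  assumes b: "b > 1" and t: "0 < t" and t0: "0 < t0" and kap: "\<kappa> = 1 / (b * t0 powr (b - 1))"
  shows "1 * t + b * (- \<kappa>) * t powr b = t * (1 - (t / t0) powr (b - 1))"
    and "1 + b * b * (- \<kappa>) * t powr (b - 1) = 1 - b * (t / t0) powr (b - 1)"
proof -
  have pos: "0 < t0 powr (b - 1)" using t0 by simp
  have "b * \<kappa> * t powr b = t * (t powr (b - 1) / t0 powr (b - 1))"
    unfolding kap powr_b_split[OF t, of b] using b pos by (simp add: field_simps)
  hence "b * \<kappa> * t powr b = t * (t / t0) powr (b - 1)" by (simp only: powr_divide)
  thus "1 * t + b * (- \<kappa>) * t powr b = t * (1 - (t / t0) powr (b - 1))" by (simp add: algebra_simps)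
  have "b * b * \<kappa> * t powr (b - 1) = b * (t powr (b - 1) / t0 powr (b - 1))"
    unfolding kap using b pos by (simp add: field_simps)
  hence e: "b * b * \<kappa> * t powr (b - 1) = b * (t / t0) powr (b - 1)" by (simp only: powr_divide)
  have "b * b * (- \<kappa>) * t powr (b - 1) = - (b * b * \<kappa> * t powr (b - 1))" by simp
  thus "1 + b * b * (- \<kappa>) * t powr (b - 1) = 1 - b * (t / t0) powr (b - 1)" using e by linarith
qed

lemma ln_window: fixes \<theta> :: real assumes "0 < \<theta>" "\<theta> \<le> 1/2" shows "ln (1 + \<theta>) - ln (1 - \<theta>) \<le> 3 * \<theta>"
proof -
  have "ln (1 + \<theta>) \<le> \<theta>" using assms by (intro ln_add_one_self_le_self) auto
  moreover have "- \<theta> - 2 * \<theta>\<^sup>2 \<le> ln (1 - \<theta>)" using assms by (intro ln_one_minus_pos_lower_bound) auto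
  moreover have "2 * \<theta>\<^sup>2 \<le> \<theta>" using assms by (simp add: power2_eq_square)
  ultimately show ?thesis by linarith
qed

lemma C5_main:
  fixes b t0 \<theta> :: real
  assumes b: "b > 1" and t0: "0 < t0" and th: "0 < \<theta>" "\<theta> \<le> (1 - 1 / b) / 2"
  defines "\<kappa> \<equiv> 1 / (b * t0 powr (b - 1))" and "t1 \<equiv> t0 * (1 / b) powr (1 / (b - 1))"
  shows "bnd (Kf b 1 (- \<kappa>)) {t1..} (4 / (t1 * \<theta>) + 3 * \<theta> / (b - 1) + 4 / (t0 * \<theta>))"
proof -
  define p where "p = b - 1"
  have p: "p > 0" using b p_def by simp
  have "(1 - 1 / b) / 2 \<le> 1 / 2" using b by simp
  hence th2: "\<theta> \<le> 1/2" "\<theta> < 1" using th by linarith+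
  define tL where "tL = t0 * (1 - \<theta>) powr (1 / p)"
  define tR where "tR = t0 * (1 + \<theta>) powr (1 / p)"
  have t1p: "0 < t1" unfolding t1_def using t0 b by simp
  have "1 / b \<le> 1 - \<theta>" using th b by (simp add: field_simps)
  hence t1L: "t1 \<le> tL" unfolding t1_def tL_def p_def using t0 b th2
    by (intro mult_left_mono powr_mono2) auto
  have tLR: "tL \<le> tR" unfolding tL_def tR_def using t0 th p th2
    by (intro mult_left_mono powr_mono2) auto
  have t0R: "t0 \<le> tR" unfolding tR_def using t0 th p
    using mult_left_mono[of 1 "(1 + \<theta>) powr (1 / p)" t0] ge_one_powr_ge_zero[of "1 + \<theta>" "1 / p"] by auto
  have tLp: "0 < tL" using t1p t1L by simp
  have E: "1 * t + b * (- \<kappa>) * t powr b = t * (1 - (t / t0) powr p)"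
    "1 + b * b * (- \<kappa>) * t powr (b - 1) = 1 - b * (t / t0) powr p" if "0 < t" for t
    using stat_expr[OF b that t0 \<kappa>_def[THEN meta_eq_to_obj_eq]] unfolding p_def by auto
  have cont: "continuous_on {0<..} (Kf b 1 (- \<kappa>))" by (rule Kf_cont)
  have Z2: "bnd (Kf b 1 (- \<kappa>)) {t1..tL} (4 / (t1 * \<theta>))"
  proof (rule Kf_ibp[OF b])
    show "{t1..tL} \<subseteq> {0<..}" using t1p by auto
    show "0 < t1 * \<theta>" using t1p th by simp
  next
    fix t assume t: "t \<in> {t1..tL}"
    have tp: "0 < t" using t t1p by auto
    have "(t / t0) powr p \<le> 1 - \<theta>" using u_le[OF p tp t0 _ ] t th2 unfolding tL_def by auto
    hence "t1 * \<theta> \<le> t * (1 - (t / t0) powr p)" using t th t1p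
      by (intro mult_mono) auto
    thus "t1 * \<theta> \<le> \<bar>1 * t + b * (- \<kappa>) * t powr b\<bar>" unfolding E(1)[OF tp] by linarith
  next
    have "\<forall>t\<in>{t1..tL}. 1 + b * b * (- \<kappa>) * t powr (b - 1) \<le> 0"
    proof
      fix t assume t: "t \<in> {t1..tL}"
      have tp: "0 < t" using t t1p by auto
      have "1 / b \<le> (t / t0) powr p" using u_ge[OF p tp t0] t b unfolding t1_def p_def by auto
      hence "1 \<le> b * (t / t0) powr p" using b by (simp add: field_simps)
      thus "1 + b * b * (- \<kappa>) * t powr (b - 1) \<le> 0" unfolding E(2)[OF tp] by simp
    qed
    thus "(\<forall>t\<in>{t1..tL}. 0 \<le> 1 + b * b * (- \<kappa>) * t powr (b - 1)) \<or> (\<forall>t\<in>{t1..tL}. 1 + b * b * (- \<kappa>) * t powr (b - 1) \<le> 0)" ..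
  qed auto
  have Z3: "bnd (Kf b 1 (- \<kappa>)) {tL..tR} (3 * \<theta> / (b - 1))"
  proof -
    have "bnd (Kf b 1 (- \<kappa>)) {tL..tR} (ln tR - ln tL)" by (rule bnd_log[OF tLp tLR])
    moreover have "ln tR - ln tL = (ln (1 + \<theta>) - ln (1 - \<theta>)) / p"
      unfolding tR_def tL_def using t0 th2 th p by (simp add: ln_mult ln_powr field_simps)
    moreover have "(ln (1 + \<theta>) - ln (1 - \<theta>)) / p \<le> 3 * \<theta> / (b - 1)"
      using ln_window[OF th(1) th2(1)] p unfolding p_def by (simp add: divide_right_mono)
    ultimately show ?thesis by (metis bnd_mono order_refl)
  qed
  have Z4: "bnd (Kf b 1 (- \<kappa>)) {tR..} (4 / (t0 * \<theta>))"
  proof (rule Kf_ibp[OF b])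
    show "{tR..} \<subseteq> {0<..}" using tLp tLR by auto
    show "0 < t0 * \<theta>" using t0 th by simp
  next
    fix t assume t: "t \<in> {tR..}"
    have tp: "0 < t" using t tLp tLR by auto
    have "1 + \<theta> \<le> (t / t0) powr p" using u_ge[OF p tp t0] t th unfolding tR_def by auto
    hence "t0 * \<theta> \<le> t * ((t / t0) powr p - 1)" using t t0R th t0
      by (intro mult_mono) auto
    thus "t0 * \<theta> \<le> \<bar>1 * t + b * (- \<kappa>) * t powr b\<bar>" unfolding E(1)[OF tp] by (simp add: algebra_simps)
  next
    have "\<forall>t\<in>{tR..}. 1 + b * b * (- \<kappa>) * t powr (b - 1) \<le> 0"
    proof
      fix t assume t: "t \<in> {tR..}"
      have tp: "0 < t" using t tLp tLR by auto
      have "1 + \<theta> \<le> (t / t0) powr p" using u_ge[OF p tp t0] t th unfolding tR_def by auto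
      hence "1 \<le> (t / t0) powr p" using th by simp
      hence "1 \<le> b * (t / t0) powr p" using b by (smt (verit) mult_less_cancel_right1)
      thus "1 + b * b * (- \<kappa>) * t powr (b - 1) \<le> 0" unfolding E(2)[OF tp] by simp
    qed
    thus "(\<forall>t\<in>{tR..}. 0 \<le> 1 + b * b * (- \<kappa>) * t powr (b - 1)) \<or> (\<forall>t\<in>{tR..}. 1 + b * b * (- \<kappa>) * t powr (b - 1) \<le> 0)" ..
  qed auto
  have J1: "bnd (Kf b 1 (- \<kappa>)) ({t1..tL} \<union> {tL..tR}) (4 / (t1 * \<theta>) + 3 * \<theta> / (b - 1))"
    by (rule bnd_join[where p=tL, OF cont _ _ _ _ _ _ Z2 Z3]) (use t1p t1L tLR in auto)
  have J2: "bnd (Kf b 1 (- \<kappa>)) (({t1..tL} \<union> {tL..tR}) \<union> {tR..}) (4 / (t1 * \<theta>) + 3 * \<theta> / (b - 1) + 4 / (t0 * \<theta>))"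
    by (rule bnd_join[where p=tR, OF cont _ _ _ _ _ _ J1 Z4]) (use t1p t1L tLR in auto)
  moreover have "({t1..tL} \<union> {tL..tR}) \<union> {tR..} = {t1..}" using t1L tLR by auto
  ultimately show ?thesis by simp
qed

lemma C5_Z1:
  fixes b t0 A :: real
  assumes b: "b > 1" and t0: "0 < t0" and A: "0 < A"
  defines "\<kappa> \<equiv> 1 / (b * t0 powr (b - 1))" and "t1 \<equiv> t0 * (1 / b) powr (1 / (b - 1))"
  shows "bnd (Kf b 1 (- \<kappa>)) {A..t1} (4 / (A * (1 - 1 / b)))"
proof (rule Kf_ibp[OF b])
  define p where "p = b - 1"
  have p: "p > 0" using b p_def by simp
  have E: "1 * t + b * (- \<kappa>) * t powr b = t * (1 - (t / t0) powr p)"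
    "1 + b * b * (- \<kappa>) * t powr (b - 1) = 1 - b * (t / t0) powr p" if "0 < t" for t
    using stat_expr[OF b that t0 \<kappa>_def[THEN meta_eq_to_obj_eq]] unfolding p_def by auto
  show "{A..t1} \<subseteq> {0<..}" using A by auto
  show "0 < A * (1 - 1 / b)" using A b by simp
  fix t assume t: "t \<in> {A..t1}"
  have tp: "0 < t" using t A by auto
  have u: "(t / t0) powr p \<le> 1 / b" using u_le[OF p tp t0] t b unfolding t1_def p_def by auto
  hence "A * (1 - 1 / b) \<le> t * (1 - (t / t0) powr p)" using t b A by (intro mult_mono) auto
  thus "A * (1 - 1 / b) \<le> \<bar>1 * t + b * (- \<kappa>) * t powr b\<bar>" unfolding E(1)[OF tp] by linarith
next
  define p where "p = b - 1"
  have p: "p > 0" using b p_def by simp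
  have "\<forall>t\<in>{A..t1}. 0 \<le> 1 + b * b * (- \<kappa>) * t powr (b - 1)"
  proof
    fix t assume t: "t \<in> {A..t1}"
    have tp: "0 < t" using t A by auto
    have u: "(t / t0) powr p \<le> 1 / b" using u_le[OF p tp t0] t b unfolding t1_def p_def by auto
    hence "b * (t / t0) powr p \<le> 1" using b by (simp add: field_simps)
    moreover have "1 + b * b * (- \<kappa>) * t powr (b - 1) = 1 - b * (t / t0) powr p"
      using stat_expr(2)[OF b tp t0 \<kappa>_def[THEN meta_eq_to_obj_eq]] unfolding p_def .
    ultimately show "0 \<le> 1 + b * b * (- \<kappa>) * t powr (b - 1)" by linarith
  qed
  thus "(\<forall>t\<in>{A..t1}. 0 \<le> 1 + b * b * (- \<kappa>) * t powr (b - 1)) \<or> (\<forall>t\<in>{A..t1}. 1 + b * b * (- \<kappa>) * t powr (b - 1) \<le> 0)" ..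
qed auto

lemma powr_half_sq: "0 < (x::real) \<Longrightarrow> x powr (1/2) * x powr (1/2) = x"
  by (simp add: powr_add[symmetric])

definition C5K :: "real \<Rightarrow> real" where "C5K b = (let \<theta>0 = (1 - 1 / b) / 2; r = ((1 / b) powr (1 / (b - 1))) powr (1/2) in
   4 / (\<theta>0 * r * r * r) + 3 * \<theta>0 * r / (b - 1) + 4 / (\<theta>0 * r))"

lemma C5_full:
  fixes b t0 A \<kappa> :: real
  assumes b: "b > 1" and t0: "(1 / b) powr (1 / (b - 1)) \<le> t0" and A: "0 < A"
    and kap: "\<kappa> = 1 / (b * t0 powr (b - 1))"
  shows "bnd (Kf b 1 (- \<kappa>)) {A..} (4 / (A * (1 - 1 / b)) + C5K b / t0 powr (1/2))"
proof -
  define \<beta> where "\<beta> = (1 / b) powr (1 / (b - 1))"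
  define \<theta>0 where "\<theta>0 = (1 - 1 / b) / 2"
  define r where "r = \<beta> powr (1/2)"
  define s where "s = t0 powr (1/2)"
  have bp: "0 < \<beta>" unfolding \<beta>_def using b by simp
  have t0p: "0 < t0" using bp t0 unfolding \<beta>_def by linarith
  have rp: "0 < r" unfolding r_def using bp by simp
  have sp: "0 < s" unfolding s_def using t0p by simp
  have rr: "r * r = \<beta>" unfolding r_def using powr_half_sq[OF bp] .
  have ss: "s * s = t0" unfolding s_def using powr_half_sq[OF t0p] .
  have rs: "r \<le> s" unfolding r_def s_def using t0 bp unfolding \<beta>_def by (intro powr_mono2) auto
  have th0: "0 < \<theta>0" unfolding \<theta>0_def using b by (simp add: field_simps)
  define \<theta> where "\<theta> = \<theta>0 * r / s"
  have thp: "0 < \<theta>" unfolding \<theta>_def using th0 rp sp by simp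
  have thle: "\<theta> \<le> (1 - 1 / b) / 2"
  proof -
    have "r / s \<le> 1" using rs sp by simp
    hence "\<theta>0 * (r / s) \<le> \<theta>0 * 1" using th0 by (intro mult_left_mono) auto
    thus ?thesis unfolding \<theta>_def \<theta>0_def by simp
  qed
  define t1 where "t1 = t0 * (1 / b) powr (1 / (b - 1))"
  have t1p: "0 < t1" unfolding t1_def using t0p b by simp
  have M: "bnd (Kf b 1 (- \<kappa>)) {t1..} (4 / (t1 * \<theta>) + 3 * \<theta> / (b - 1) + 4 / (t0 * \<theta>))"
    using C5_main[OF b t0p thp thle] unfolding kap t1_def .
  have eq: "4 / (t1 * \<theta>) + 3 * \<theta> / (b - 1) + 4 / (t0 * \<theta>) = C5K b / s"
  proof -
    have t1e: "t1 = s * s * (r * r)" unfolding t1_def ss rr \<beta>_def ..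
    have "C5K b = 4 / (\<theta>0 * r * r * r) + 3 * \<theta>0 * r / (b - 1) + 4 / (\<theta>0 * r)"
      unfolding C5K_def Let_def \<theta>0_def r_def \<beta>_def ..
    moreover have "4 / (t1 * \<theta>) = 4 / (\<theta>0 * r * r * r) / s"
      unfolding t1e \<theta>_def using sp rp th0 by (simp add: field_simps)
    moreover have "3 * \<theta> / (b - 1) = 3 * \<theta>0 * r / (b - 1) / s"
      unfolding \<theta>_def using sp rp th0 b by (simp add: field_simps)
    moreover have "4 / (t0 * \<theta>) = 4 / (\<theta>0 * r) / s"
      unfolding ss[symmetric] \<theta>_def using sp rp th0 by (simp add: field_simps)
    ultimately show ?thesis by (simp add: add_divide_distrib)
  qed
  have Mt: "bnd (Kf b 1 (- \<kappa>)) {t1..} (C5K b / t0 powr (1/2))" using M eq unfolding s_def by simp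
  have Z1: "bnd (Kf b 1 (- \<kappa>)) {A..t1} (4 / (A * (1 - 1 / b)))"
    using C5_Z1[OF b t0p A] unfolding kap t1_def .
  have Z1nn: "0 \<le> 4 / (A * (1 - 1 / b))" using A b by (simp add: field_simps)
  have Mnn: "0 \<le> C5K b / t0 powr (1/2)"
    using bnd_nonneg[OF Mt, of t1] t1p by simp
  show ?thesis
  proof (cases "A \<le> t1")
    case True
    have "bnd (Kf b 1 (- \<kappa>)) ({A..t1} \<union> {t1..}) (4 / (A * (1 - 1 / b)) + C5K b / t0 powr (1/2))"
      by (rule bnd_join[where p=t1, OF Kf_cont _ _ _ _ _ _ Z1 Mt]) (use A True in auto)
    moreover have "{A..t1} \<union> {t1..} = {A..}" using True by auto
    ultimately show ?thesis by simp
  next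
    case False
    show ?thesis by (rule bnd_mono[OF Mt]) (use False Z1nn in auto)
  qed
qed

lemma C5K_pos: "b > 1 \<Longrightarrow> 0 < C5K b"
  unfolding C5K_def Let_def by (intro add_pos_pos divide_pos_pos mult_pos_pos) (auto simp: field_simps)

definition CDs :: "real \<Rightarrow> real" where "CDs b = 1 + 4 + 4 / (1 - 1 / b) + C5K b * b powr (1 / (2 * (b - 1)))"

lemma bnd_zero_fun: "bnd (\<lambda>t. 0) S B \<longleftrightarrow> (S \<noteq> {} \<longrightarrow> 0 \<le> B)"
  unfolding bnd_def by auto

lemma D1_small:
  fixes b \<delta> :: real
  assumes b: "b > 1" and d: "\<bar>\<delta>\<bar> \<le> 1"
  shows "bnd (\<lambda>t. Kf b 1 \<delta> t - Kf b 1 0 t) {0<..} (CDs b * \<bar>\<delta>\<bar> powr (1 / (2 * b)))"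
proof (cases "\<delta> = 0")
  case True
  have "0 < 4 / (1 - 1 / b)" using b by (simp add: field_simps)
  moreover have "0 \<le> C5K b * b powr (1 / (2 * (b - 1)))" using C5K_pos[OF b] by simp
  ultimately have "CDs b \<ge> 0" unfolding CDs_def by linarith
  thus ?thesis using True bnd_zero_fun[of "{0<..}"] by simp
next
  case False
  define \<kappa> where "\<kappa> = \<bar>\<delta>\<bar>"
  have k: "0 < \<kappa>" "\<kappa> \<le> 1" using False d unfolding \<kappa>_def by auto
  define A where "A = \<kappa> powr (- 1 / (2 * b))"
  define e where "e = \<kappa> powr (1 / (2 * b))"
  have Ap: "0 < A" unfolding A_def using k by simp
  have ep: "0 < e" unfolding e_def using k by simp
  have Ae: "1 / A = e"
  proof -
    have "A = \<kappa> powr (- (1 / (2 * b)))" unfolding A_def by (simp only: minus_divide_left)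
    also have "\<dots> = 1 / e" unfolding e_def by (rule powr_minus_divide)
    finally show ?thesis using ep by simp
  qed
  have Ab: "\<kappa> * A powr (b - 1) * A = \<kappa> powr (1/2)"
  proof -
    have "A powr (b - 1) * A = A powr b" using powr_b_split[OF Ap, of b] by (simp add: mult.commute)
    also have "\<dots> = \<kappa> powr (- 1 / (2 * b) * b)" unfolding A_def by (simp add: powr_powr)
    also have "- 1 / (2 * b) * b = - (1/2)" using b by simp
    finally have "A powr (b - 1) * A = \<kappa> powr (- (1/2))" .
    hence "\<kappa> * A powr (b - 1) * A = \<kappa> * \<kappa> powr (- (1/2))" by (simp add: mult.assoc)
    also have "\<dots> = \<kappa> powr (1/2)"
    proof -
      have "\<kappa> powr 1 * \<kappa> powr (- (1/2)) = \<kappa> powr (1 + - (1/2))" by (rule powr_add[symmetric])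
      thus ?thesis using k by simp
    qed
    finally show ?thesis .
  qed
  have half: "\<kappa> powr (1/2) \<le> e" unfolding e_def using k b by (intro powr_mono') (auto simp: field_simps)
  have S: "bnd (\<lambda>t. Kf b 1 \<delta> t - Kf b 1 0 t) {0<..A} e"
  proof -
    have "bnd (\<lambda>t. Kf b 1 \<delta> t - Kf b 1 0 t) {0<..A} ((\<bar>1 - 1\<bar> + \<bar>\<delta> - 0\<bar> * A powr (b - 1)) * A)"
      by (rule bnd_small[OF b Ap])
    moreover have "(\<bar>1 - 1\<bar> + \<bar>\<delta> - 0\<bar> * A powr (b - 1)) * A = \<kappa> powr (1/2)" using Ab unfolding \<kappa>_def by simp
    ultimately show ?thesis using half by (metis bnd_mono order_refl)
  qed
  have F0: "bnd (Kf b 1 0) {A..} (4 * e)"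
    using C_lin[OF b _ _ Ap, of 1 0] Ae by (simp add: divide_inverse mult.commute)
  have F1: "bnd (Kf b 1 \<delta>) {A..} (4 / (1 - 1 / b) * e + C5K b * b powr (1 / (2 * (b - 1))) * e)"
  proof (cases "\<delta> > 0")
    case True
    have "bnd (Kf b 1 \<delta>) {A..} (4 * e)"
      using C_lin[OF b _ _ Ap, of 1 \<delta>] Ae True by (simp add: divide_inverse mult.commute)
    moreover have "4 * e \<le> 4 / (1 - 1 / b) * e + C5K b * b powr (1 / (2 * (b - 1))) * e"
    proof -
      have "4 \<le> 4 / (1 - 1 / b)" using b by (simp add: field_simps)
      hence "4 * e \<le> 4 / (1 - 1 / b) * e" using ep by (intro mult_right_mono) auto
      moreover have "0 \<le> C5K b * b powr (1 / (2 * (b - 1))) * e" using C5K_pos[OF b] ep by simp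
      ultimately show ?thesis by linarith
    qed
    ultimately show ?thesis by (elim bnd_mono) auto
  next
    case False
    hence dk: "\<delta> = - \<kappa>" unfolding \<kappa>_def using \<open>\<delta> \<noteq> 0\<close> by simp
    define p where "p = b - 1"
    have p: "0 < p" using b p_def by simp
    define t0 where "t0 = (b * \<kappa>) powr (- 1 / p)"
    have bk: "0 < b * \<kappa>" using b k by simp
    have t0p: "0 < t0" unfolding t0_def using b k by simp
    have t0ge: "(1 / b) powr (1 / (b - 1)) \<le> t0"
    proof -
      have "b powr (- 1 / p) \<le> (b * \<kappa>) powr (- 1 / p)"
        using p bk k b by (intro powr_mono2') (auto simp: mult_le_cancel_left1 field_simps)
      moreover have "(1 / b) powr (1 / (b - 1)) = b powr (- 1 / p)"
      proof -
        have "b powr (- 1 / p) = b powr (- (1 / p))" by (simp only: minus_divide_left)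
        also have "\<dots> = 1 / b powr (1 / p)" by (rule powr_minus_divide)
        also have "\<dots> = (1 / b) powr (1 / p)" by (simp add: powr_divide)
        finally show ?thesis unfolding p_def by simp
      qed
      ultimately show ?thesis unfolding t0_def by simp
    qed
    have kap: "\<kappa> = 1 / (b * t0 powr (b - 1))"
    proof -
      have "t0 powr (b - 1) = (b * \<kappa>) powr (- 1 / p * p)" unfolding t0_def p_def by (simp add: powr_powr)
      also have "- 1 / p * p = - 1" using p by simp
      finally have "t0 powr (b - 1) = 1 / (b * \<kappa>)" using bk by (simp add: powr_neg_one)
      thus ?thesis using b k by simp
    qed
    have C: "bnd (Kf b 1 (- \<kappa>)) {A..} (4 / (A * (1 - 1 / b)) + C5K b / t0 powr (1/2))"
      by (rule C5_full[OF b t0ge Ap kap])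
    have bnz: "1 - 1 / b \<noteq> 0" using b by simp
    have "4 / (A * (1 - 1 / b)) = 4 / (1 - 1 / b) * (1 / A)" using Ap bnz by (simp add: field_simps)
    hence e1: "4 / (A * (1 - 1 / b)) = 4 / (1 - 1 / b) * e" using Ae by simp
    have e2: "1 / t0 powr (1/2) \<le> b powr (1 / (2 * (b - 1))) * e"
    proof -
      have "t0 powr (1/2) = (b * \<kappa>) powr (- 1 / p * (1/2))" unfolding t0_def by (simp add: powr_powr)
      also have "- 1 / p * (1/2) = - (1 / (2 * p))" by simp
      also have "(b * \<kappa>) powr (- (1 / (2 * p))) = 1 / (b * \<kappa>) powr (1 / (2 * p))" by (rule powr_minus_divide)
      finally have "1 / t0 powr (1/2) = (b * \<kappa>) powr (1 / (2 * p))" by simp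
      also have "\<dots> = b powr (1 / (2 * p)) * \<kappa> powr (1 / (2 * p))" using b k by (simp add: powr_mult)
      also have "\<kappa> powr (1 / (2 * p)) \<le> e" unfolding e_def using k p b
        by (intro powr_mono') (auto simp: p_def field_simps)
      hence "b powr (1 / (2 * p)) * \<kappa> powr (1 / (2 * p)) \<le> b powr (1 / (2 * p)) * e"
        by (intro mult_left_mono) auto
      finally show ?thesis unfolding p_def .
    qed
    have "C5K b / t0 powr (1/2) \<le> C5K b * b powr (1 / (2 * (b - 1))) * e"
      using mult_left_mono[OF e2 less_imp_le[OF C5K_pos[OF b]]] by (simp add: mult.assoc)
    hence "bnd (Kf b 1 (- \<kappa>)) {A..} (4 / (1 - 1 / b) * e + C5K b * b powr (1 / (2 * (b - 1))) * e)"
      using C unfolding e1 by (elim bnd_mono) auto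
    thus ?thesis unfolding dk .
  qed
  have D: "bnd (\<lambda>t. Kf b 1 \<delta> t - Kf b 1 0 t) {A..} (4 / (1 - 1 / b) * e + C5K b * b powr (1 / (2 * (b - 1))) * e + 4 * e)"
    by (rule bnd_diff[OF Kf_cont Kf_cont _ F1 F0]) (use Ap in auto)
  have J: "bnd (\<lambda>t. Kf b 1 \<delta> t - Kf b 1 0 t) ({0<..A} \<union> {A..}) (e + (4 / (1 - 1 / b) * e + C5K b * b powr (1 / (2 * (b - 1))) * e + 4 * e))"
    by (rule bnd_join[where p=A, OF Kf_cont2 _ _ _ _ _ _ S D]) (use Ap in auto)
  moreover have "{0<..A} \<union> {A..} = {0<..}" using Ap by auto
  moreover have "e + (4 / (1 - 1 / b) * e + C5K b * b powr (1 / (2 * (b - 1))) * e + 4 * e) = CDs b * \<bar>\<delta>\<bar> powr (1 / (2 * b))"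
    unfolding CDs_def e_def \<kappa>_def by (simp add: algebra_simps)
  ultimately show ?thesis by simp
qed

definition CEs :: "real \<Rightarrow> real" where "CEs b = 1 + 8 / (b - 1)"

lemma CEs_pos: "b > 1 \<Longrightarrow> 0 < CEs b" unfolding CEs_def by (simp add: add_pos_pos)

lemma E_small:
  fixes b \<eta> :: real
  assumes b: "b > 1" and d: "\<bar>\<eta>\<bar> \<le> 1"
  shows "bnd (\<lambda>t. Kf b \<eta> 1 t - Kf b 0 1 t) {0<..} (CEs b * \<bar>\<eta>\<bar> powr (1 / 2))"
proof (cases "\<eta> = 0")
  case True
  thus ?thesis using CEs_pos[OF b] bnd_zero_fun[of "{0<..}"] by simp
next
  case False
  define \<kappa> where "\<kappa> = \<bar>\<eta>\<bar>"
  have k: "0 < \<kappa>" "\<kappa> \<le> 1" using False d unfolding \<kappa>_def by auto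
  define A where "A = \<kappa> powr (- (1 / 2))"
  define e where "e = \<kappa> powr (1 / 2)"
  have Ap: "0 < A" unfolding A_def using k by simp
  have ep: "0 < e" unfolding e_def using k by simp
  have Ae: "A = 1 / e" unfolding A_def e_def by (rule powr_minus_divide)
  have e1: "e \<le> 1" unfolding e_def using k powr_mono2[of "1/2" \<kappa> 1] by simp
  have A1: "1 \<le> A" unfolding Ae using e1 ep by (simp add: le_divide_eq)
  have kA: "\<kappa> * A = e"
  proof -
    have "\<kappa> powr 1 * \<kappa> powr (- (1/2)) = \<kappa> powr (1 + - (1/2))" by (rule powr_add[symmetric])
    thus ?thesis unfolding A_def e_def using k by simp
  qed
  have S: "bnd (\<lambda>t. Kf b \<eta> 1 t - Kf b 0 1 t) {0<..A} e"
  proof -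
    have "bnd (\<lambda>t. Kf b \<eta> 1 t - Kf b 0 1 t) {0<..A} ((\<bar>\<eta> - 0\<bar> + \<bar>1 - 1\<bar> * A powr (b - 1)) * A)"
      by (rule bnd_small[OF b Ap])
    thus ?thesis using kA unfolding \<kappa>_def by simp
  qed
  have Ab: "A \<le> A powr b" using A1 b powr_mono[of 1 b A] by simp
  have Ab1: "1 \<le> A powr (b - 1)" using A1 b by (intro ge_one_powr_ge_zero) auto
  have tailb: "4 / ((b - 1) * \<bar>1::real\<bar> * A powr b) \<le> 4 / (b - 1) * e"
  proof -
    have "4 / ((b - 1) * A powr b) \<le> 4 / ((b - 1) * A)"
      using Ab Ap b by (intro divide_left_mono mult_left_mono mult_pos_pos) auto
    also have "\<dots> = 4 / (b - 1) * e"
    proof -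
      have "b - 1 \<noteq> 0" using b by simp
      thus ?thesis unfolding Ae using ep by (simp add: field_simps)
    qed
    finally show ?thesis by simp
  qed
  have T1: "bnd (Kf b \<eta> 1) {A..} (4 / (b - 1) * e)"
    by (rule bnd_mono[OF C_far[OF b _ Ap] _ tailb]) (use Ab1 d in auto)
  have T0: "bnd (Kf b 0 1) {A..} (4 / (b - 1) * e)"
    by (rule bnd_mono[OF C_far[OF b _ Ap] _ tailb]) (use Ab1 in auto)
  have D: "bnd (\<lambda>t. Kf b \<eta> 1 t - Kf b 0 1 t) {A..} (4 / (b - 1) * e + 4 / (b - 1) * e)"
    by (rule bnd_diff[OF Kf_cont Kf_cont _ T1 T0]) (use Ap in auto)
  have J: "bnd (\<lambda>t. Kf b \<eta> 1 t - Kf b 0 1 t) ({0<..A} \<union> {A..}) (e + (4 / (b - 1) * e + 4 / (b - 1) * e))"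
    by (rule bnd_join[where p=A, OF Kf_cont2 _ _ _ _ _ _ S D]) (use Ap in auto)
  moreover have "{0<..A} \<union> {A..} = {0<..}" using Ap by auto
  moreover have "e + (4 / (b - 1) * e + 4 / (b - 1) * e) = CEs b * \<bar>\<eta>\<bar> powr (1 / 2)"
    unfolding CEs_def e_def \<kappa>_def by (simp add: algebra_simps)
  ultimately show ?thesis by simp
qed

definition CF :: "real \<Rightarrow> real" where "CF b = 6 + 4 / (b - 1)"

lemma F_bound:
  fixes b \<delta> :: real
  assumes b: "b > 1" and d: "\<delta> \<noteq> 0"
  shows "bnd (\<lambda>t. Kf b 1 0 t - Kf b 0 \<delta> t) {0<..} (CF b + \<bar>ln \<bar>\<delta>\<bar>\<bar> / b)"
proof -
  define \<kappa> where "\<kappa> = \<bar>\<delta>\<bar>"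
  have k: "0 < \<kappa>" using d unfolding \<kappa>_def by auto
  define K where "K = \<kappa> powr (- (1 / b))"
  have Kp: "0 < K" unfolding K_def using k by simp
  have kK: "\<kappa> * K powr b = 1"
  proof -
    have "K powr b = \<kappa> powr (- (1 / b) * b)" unfolding K_def by (simp add: powr_powr)
    also have "- (1 / b) * b = - 1" using b by simp
    finally show ?thesis using k by (simp add: powr_neg_one)
  qed
  have lnK: "ln K = - ln \<kappa> / b" unfolding K_def using k by (simp add: ln_powr)
  have kK1: "\<kappa> * K powr (b - 1) * K = 1"
    using kK powr_b_split[OF Kp, of b] by (simp add: mult_ac)
  have cf: "4 / ((b - 1) * \<bar>0 - \<delta>\<bar> * K powr b) = 4 / (b - 1)"
    using kK unfolding \<kappa>_def by (simp add: mult.assoc)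
  have TK: "bnd (Kf b 0 \<delta>) {K..} (4 / (b - 1))"
  proof -
    have "bnd (Kf b 0 \<delta>) {K..} (4 / ((b - 1) * \<bar>\<delta>\<bar> * K powr b))"
      by (rule C_far[OF b d Kp]) simp
    moreover have "4 / ((b - 1) * \<bar>\<delta>\<bar> * K powr b) = 4 / (b - 1)"
      using kK unfolding \<kappa>_def by (simp add: mult.assoc)
    ultimately show ?thesis by simp
  qed
  have T10: "bnd (Kf b 1 0) {1..} 4"
    using C_lin[OF b _ _ zero_less_one, of 1 0] by simp
  have b4: "0 \<le> 4 / (b - 1)" using b by simp
  show ?thesis
  proof (cases "\<kappa> \<le> 1")
    case True
    have K1: "1 \<le> K"
    proof -
      have "\<kappa> powr (1 / b) \<le> 1 powr (1 / b)" using True k b by (intro powr_mono2) auto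
      moreover have "0 < \<kappa> powr (1 / b)" using k by simp
      ultimately show ?thesis unfolding K_def powr_minus_divide by simp
    qed
    have S: "bnd (\<lambda>t. Kf b 1 0 t - Kf b 0 \<delta> t) {0<..1} 2"
    proof -
      have "bnd (\<lambda>t. Kf b 1 0 t - Kf b 0 \<delta> t) {0<..1} ((\<bar>1 - 0\<bar> + \<bar>0 - \<delta>\<bar> * 1 powr (b - 1)) * 1)"
        by (rule bnd_small[OF b zero_less_one])
      thus ?thesis using True unfolding \<kappa>_def by (elim bnd_mono) auto
    qed
    have L: "bnd (Kf b 0 \<delta>) {1..K} (ln K - ln 1)" by (rule bnd_log[OF zero_less_one K1])
    have T0: "bnd (Kf b 0 \<delta>) ({1..K} \<union> {K..}) (ln K - ln 1 + 4 / (b - 1))"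
      by (rule bnd_join[where p=K, OF Kf_cont _ _ _ _ _ _ L TK]) (use K1 in auto)
    have "{1..K} \<union> {K..} = {1..}" using K1 by auto
    hence T0': "bnd (Kf b 0 \<delta>) {1..} (ln K + 4 / (b - 1))" using T0 by simp
    have D: "bnd (\<lambda>t. Kf b 1 0 t - Kf b 0 \<delta> t) {1..} (4 + (ln K + 4 / (b - 1)))"
      by (rule bnd_diff[OF Kf_cont Kf_cont _ T10 T0']) auto
    have J: "bnd (\<lambda>t. Kf b 1 0 t - Kf b 0 \<delta> t) ({0<..1} \<union> {1..}) (2 + (4 + (ln K + 4 / (b - 1))))"
      by (rule bnd_join[where p=1, OF Kf_cont2 _ _ _ _ _ _ S D]) auto
    moreover have "{0<..1} \<union> {1..} = ({0<..} :: real set)" by auto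
    moreover have "2 + (4 + (ln K + 4 / (b - 1))) \<le> CF b + \<bar>ln \<bar>\<delta>\<bar>\<bar> / b"
      unfolding CF_def lnK \<kappa>_def[symmetric] using b by (simp add: abs_if divide_right_mono)
    ultimately show ?thesis by (elim bnd_mono) auto
  next
    case False
    hence k1: "1 < \<kappa>" by simp
    have K1: "K \<le> 1"
    proof -
      have "1 \<le> \<kappa> powr (1 / b)" using k1 b by (intro ge_one_powr_ge_zero) auto
      thus ?thesis unfolding K_def powr_minus_divide by (simp add: divide_le_eq_1)
    qed
    have S: "bnd (\<lambda>t. Kf b 1 0 t - Kf b 0 \<delta> t) {0<..K} 2"
    proof -
      have "bnd (\<lambda>t. Kf b 1 0 t - Kf b 0 \<delta> t) {0<..K} ((\<bar>1 - 0\<bar> + \<bar>0 - \<delta>\<bar> * K powr (b - 1)) * K)"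
        by (rule bnd_small[OF b Kp])
      moreover have "(\<bar>1 - 0\<bar> + \<bar>0 - \<delta>\<bar> * K powr (b - 1)) * K = K + 1"
        using kK1 unfolding \<kappa>_def by (simp add: algebra_simps)
      ultimately show ?thesis using K1 by (elim bnd_mono) auto
    qed
    have L: "bnd (Kf b 1 0) {K..1} (ln 1 - ln K)" by (rule bnd_log[OF Kp K1])
    have T1: "bnd (Kf b 1 0) ({K..1} \<union> {1..}) (ln 1 - ln K + 4)"
      by (rule bnd_join[where p=1, OF Kf_cont _ _ _ _ _ _ L T10]) (use K1 Kp in auto)
    have "{K..1} \<union> {1..} = {K..}" using K1 by auto
    hence T1': "bnd (Kf b 1 0) {K..} (4 - ln K)" using T1 by simp
    have D: "bnd (\<lambda>t. Kf b 1 0 t - Kf b 0 \<delta> t) {K..} (4 - ln K + 4 / (b - 1))"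
      by (rule bnd_diff[OF Kf_cont Kf_cont _ T1' TK]) (use Kp in auto)
    have J: "bnd (\<lambda>t. Kf b 1 0 t - Kf b 0 \<delta> t) ({0<..K} \<union> {K..}) (2 + (4 - ln K + 4 / (b - 1)))"
      by (rule bnd_join[where p=K, OF Kf_cont2 _ _ _ _ _ _ S D]) (use Kp in auto)
    moreover have "{0<..K} \<union> {K..} = {0<..}" using Kp by auto
    moreover have "2 + (4 - ln K + 4 / (b - 1)) \<le> CF b + \<bar>ln \<bar>\<delta>\<bar>\<bar> / b"
      unfolding CF_def lnK \<kappa>_def[symmetric] using b k1 by (simp add: abs_if divide_right_mono)
    ultimately show ?thesis by (elim bnd_mono) auto
  qed
qed

lemma Kf_scale_pt:
  assumes c: "0 < c" and x: "0 < x"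
  shows "Kf b (\<alpha> / c) (\<gamma> / c powr b) (c * x) = (1 / c) *\<^sub>R Kf b \<alpha> \<gamma> x"
proof -
  have "(c * x) powr b = c powr b * x powr b" using c x by (simp add: powr_mult)
  hence "c * x * (\<alpha> / c) + \<gamma> / c powr b * (c * x) powr b = x * \<alpha> + \<gamma> * x powr b"
    using c by (simp add: field_simps)
  hence "Kf b (\<alpha> / c) (\<gamma> / c powr b) (c * x) = cis (- (x * \<alpha> + \<gamma> * x powr b)) / complex_of_real (c * x)"
    unfolding Kf_def by simp
  also have "\<dots> = (1 / c) *\<^sub>R (cis (- (x * \<alpha> + \<gamma> * x powr b)) / complex_of_real x)"
    using c x by (simp add: scaleR_conv_of_real)
  finally show ?thesis unfolding Kf_def .
qed

lemma Kf_scale_int: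
  assumes c: "0 < c" and u: "0 < u"
  shows "integral {u..v} (Kf b \<alpha> \<gamma>) = integral {c * u..c * v} (Kf b (\<alpha> / c) (\<gamma> / c powr b))"
proof -
  define f where "f = Kf b (\<alpha> / c) (\<gamma> / c powr b)"
  have "integral ((\<lambda>x. x / c) ` {c * u..c * v}) (\<lambda>x. f (c * x)) = (1 / \<bar>c\<bar>) *\<^sub>R integral {c * u..c * v} f"
    using c by (intro integral_stretch_real) auto
  moreover have "(\<lambda>x. x / c) ` {c * u..c * v} = {u..v}" using c by (simp add: image_divide_atLeastAtMost)
  moreover have "integral {u..v} (\<lambda>x. f (c * x)) = integral {u..v} (\<lambda>x. (1 / c) *\<^sub>R Kf b \<alpha> \<gamma> x)"
    unfolding f_def by (rule integral_cong) (use c u Kf_scale_pt in auto)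
  moreover have "integral {u..v} (\<lambda>x. (1 / c) *\<^sub>R Kf b \<alpha> \<gamma> x) = (1 / c) *\<^sub>R integral {u..v} (Kf b \<alpha> \<gamma>)"
    by (rule integral_cmul)
  ultimately have "(1 / c) *\<^sub>R integral {u..v} (Kf b \<alpha> \<gamma>) = (1 / c) *\<^sub>R integral {c * u..c * v} f"
    using c by simp
  thus ?thesis unfolding f_def using c by simp
qed

lemma bnd_scale:
  assumes c: "0 < c" and S: "S \<subseteq> {0<..}"
    and B: "bnd (\<lambda>t. Kf b (\<alpha> / c) (\<gamma> / c powr b) t - Kf b (\<alpha>' / c) (\<gamma>' / c powr b) t) ((\<lambda>t. c * t) ` S) B"
  shows "bnd (\<lambda>t. Kf b \<alpha> \<gamma> t - Kf b \<alpha>' \<gamma>' t) S B"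
  unfolding bnd_def
proof (intro ballI impI)
  fix u v assume uv: "u \<in> S" "v \<in> S" "u \<le> v"
  have u0: "0 < u" using uv S by auto
  have "integral {u..v} (\<lambda>t. Kf b \<alpha> \<gamma> t - Kf b \<alpha>' \<gamma>' t) = integral {u..v} (Kf b \<alpha> \<gamma>) - integral {u..v} (Kf b \<alpha>' \<gamma>')"
    by (intro integral_diff cont_int[OF Kf_cont u0])
  also have "\<dots> = integral {c * u..c * v} (Kf b (\<alpha> / c) (\<gamma> / c powr b)) - integral {c * u..c * v} (Kf b (\<alpha>' / c) (\<gamma>' / c powr b))"
    using Kf_scale_int[OF c u0] by simp
  also have "\<dots> = integral {c * u..c * v} (\<lambda>t. Kf b (\<alpha> / c) (\<gamma> / c powr b) t - Kf b (\<alpha>' / c) (\<gamma>' / c powr b) t)"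
    using c u0 by (intro integral_diff[symmetric] cont_int[OF Kf_cont]) auto
  finally have eq: "integral {u..v} (\<lambda>t. Kf b \<alpha> \<gamma> t - Kf b \<alpha>' \<gamma>' t) = \<dots>" .
  have "c * u \<in> (\<lambda>t. c * t) ` S" "c * v \<in> (\<lambda>t. c * t) ` S" "c * u \<le> c * v" using uv c by auto
  thus "cmod (integral {u..v} (\<lambda>t. Kf b \<alpha> \<gamma> t - Kf b \<alpha>' \<gamma>' t)) \<le> B"
    using B unfolding bnd_def eq by blast
qed

lemma bnd_scale1:
  assumes c: "0 < c" and S: "S \<subseteq> {0<..}"
    and B: "bnd (Kf b (\<alpha> / c) (\<gamma> / c powr b)) ((\<lambda>t. c * t) ` S) B"
  shows "bnd (Kf b \<alpha> \<gamma>) S B"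
  unfolding bnd_def
proof (intro ballI impI)
  fix u v assume uv: "u \<in> S" "v \<in> S" "u \<le> v"
  have u0: "0 < u" using uv S by auto
  have "c * u \<in> (\<lambda>t. c * t) ` S" "c * v \<in> (\<lambda>t. c * t) ` S" "c * u \<le> c * v" using uv c by auto
  thus "cmod (integral {u..v} (Kf b \<alpha> \<gamma>)) \<le> B"
    using B Kf_scale_int[OF c u0] unfolding bnd_def by metis
qed

lemma image_mult_pos: "0 < (c::real) \<Longrightarrow> (\<lambda>t. c * t) ` {0<..} = {0<..}"
proof -
  assume c: "0 < c"
  have "x \<in> (\<lambda>t. c * t) ` {0<..}" if "0 < x" for x
    using that c by (intro image_eqI[of _ _ "x / c"]) auto
  thus ?thesis using c by auto
qed

lemma image_mult_atLeast: "0 < (c::real) \<Longrightarrow> (\<lambda>t. c * t) ` {A..} = {c * A..}"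
proof -
  assume c: "0 < c"
  have "x \<in> (\<lambda>t. c * t) ` {A..}" if "c * A \<le> x" for x
    using that c by (intro image_eqI[of _ _ "x / c"]) (auto simp: field_simps)
  thus ?thesis using c by auto
qed

lemma image_mult_ivl0: "0 < (c::real) \<Longrightarrow> (\<lambda>t. c * t) ` {0<..a} = {0<..c * a}"
proof -
  assume c: "0 < c"
  have "x \<in> (\<lambda>t. c * t) ` {0<..a}" if "0 < x" "x \<le> c * a" for x
    using that c by (intro image_eqI[of _ _ "x / c"]) (auto simp: field_simps)
  thus ?thesis using c by auto
qed

lemma bnd_cnj_fun:
  assumes "bnd g S B" shows "bnd (\<lambda>t. cnj (g t)) S B"
  using assms unfolding bnd_def by (simp add: integral_cnj[symmetric])

lemma Kf_cnj: "cnj (Kf b \<alpha> \<gamma> t) = Kf b (- \<alpha>) (- \<gamma>) t"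
  unfolding Kf_def by (simp add: cis_cnj)

lemma bnd_cnj:
  assumes "bnd (\<lambda>t. Kf b (- \<alpha>) (- \<gamma>) t - Kf b (- \<alpha>') (- \<gamma>') t) S B"
  shows "bnd (\<lambda>t. Kf b \<alpha> \<gamma> t - Kf b \<alpha>' \<gamma>' t) S B"
  using bnd_cnj_fun[OF assms] by (simp add: Kf_cnj)

lemma bnd_cnj1:
  assumes "bnd (Kf b (- \<alpha>) (- \<gamma>)) S B"
  shows "bnd (Kf b \<alpha> \<gamma>) S B"
  using bnd_cnj_fun[OF assms] by (simp add: Kf_cnj)

definition C0 :: "real \<Rightarrow> real" where "C0 b = CDs b + CEs b + CF b + 2"

lemma CDs_pos: "b > 1 \<Longrightarrow> 0 < CDs b"
proof -
  assume b: "b > 1"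
  have "0 < 4 / (1 - 1 / b)" using b by (simp add: field_simps)
  moreover have "0 \<le> C5K b * b powr (1 / (2 * (b - 1)))" using C5K_pos[OF b] by simp
  ultimately show ?thesis unfolding CDs_def by linarith
qed

lemma CF_pos: "b > 1 \<Longrightarrow> 0 < CF b" unfolding CF_def by (simp add: add_pos_nonneg)

lemma C0_ge: "b > 1 \<Longrightarrow> CDs b \<le> C0 b \<and> CEs b \<le> C0 b \<and> 1 \<le> C0 b"
  using CDs_pos[of b] CEs_pos[of b] CF_pos[of b] unfolding C0_def by auto

lemma E1_large:
  fixes b \<delta> :: real
  assumes b: "b > 1" and d: "1 \<le> \<bar>\<delta>\<bar>"
  shows "bnd (\<lambda>t. Kf b 1 \<delta> t - Kf b 0 \<delta> t) {0<..} (CEs b * \<bar>\<delta>\<bar> powr (- (1 / (2 * b))))"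
proof -
  define \<kappa> where "\<kappa> = \<bar>\<delta>\<bar>"
  have k: "1 \<le> \<kappa>" "0 < \<kappa>" using d unfolding \<kappa>_def by auto
  define c where "c = \<kappa> powr (1 / b)"
  have cp: "0 < c" unfolding c_def using k by simp
  have c1: "1 \<le> c" unfolding c_def using k b by (intro ge_one_powr_ge_zero) auto
  have cb: "c powr b = \<kappa>" unfolding c_def using b k by (simp add: powr_powr)
  have eta: "\<bar>1 / c\<bar> \<le> 1" using c1 by simp
  have etaB: "CEs b * \<bar>1 / c\<bar> powr (1 / 2) = CEs b * \<bar>\<delta>\<bar> powr (- (1 / (2 * b)))"
  proof -
    have "\<bar>1 / c\<bar> powr (1 / 2) = (\<kappa> powr (1 / b)) powr (- (1/2))"
      using cp unfolding c_def[symmetric] by (simp add: powr_minus_divide powr_divide)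
    also have "\<dots> = \<kappa> powr (1 / b * - (1/2))" by (simp add: powr_powr)
    also have "1 / b * - (1/2) = - (1 / (2 * b))" by simp
    finally have "\<bar>1 / c\<bar> powr (1 / 2) = \<kappa> powr (- (1 / (2 * b)))" .
    thus ?thesis unfolding \<kappa>_def by simp
  qed
  show ?thesis
  proof (rule bnd_scale[OF cp])
    show "{0<..} \<subseteq> ({0<..} :: real set)" by simp
    have img: "(\<lambda>t. c * t) ` {0<..} = {0<..}" by (rule image_mult_pos[OF cp])
    show "bnd (\<lambda>t. Kf b (1 / c) (\<delta> / c powr b) t - Kf b (0 / c) (\<delta> / c powr b) t) ((\<lambda>t. c * t) ` {0<..})
      (CEs b * \<bar>\<delta>\<bar> powr (- (1 / (2 * b))))"
      unfolding img cb
    proof (cases "\<delta> > 0")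
      case True
      hence eq: "\<delta> / \<kappa> = 1" unfolding \<kappa>_def by simp
      have X: "bnd (\<lambda>t. Kf b (1 / c) 1 t - Kf b 0 1 t) {0<..} (CEs b * \<bar>\<delta>\<bar> powr (- (1 / (2 * b))))"
        using E_small[OF b eta] unfolding etaB .
      show "bnd (\<lambda>t. Kf b (1 / c) (\<delta> / \<kappa>) t - Kf b (0 / c) (\<delta> / \<kappa>) t) {0<..} (CEs b * \<bar>\<delta>\<bar> powr (- (1 / (2 * b))))"
        unfolding eq div_0 by (rule X)
    next
      case False
      hence "\<delta> / \<kappa> = - 1" unfolding \<kappa>_def using k by (simp add: \<kappa>_def)
      hence eq: "\<delta> / \<kappa> = - 1" .
      have eta': "\<bar>- (1 / c)\<bar> \<le> 1" using eta by (simp only: abs_minus_cancel)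
      have X: "bnd (\<lambda>t. Kf b (- (1 / c)) 1 t - Kf b 0 1 t) {0<..} (CEs b * \<bar>\<delta>\<bar> powr (- (1 / (2 * b))))"
        using E_small[OF b eta'] unfolding abs_minus_cancel etaB .
      have X': "bnd (\<lambda>t. Kf b (- (1 / c)) (- (\<delta> / \<kappa>)) t - Kf b (- (0 / c)) (- (\<delta> / \<kappa>)) t) {0<..} (CEs b * \<bar>\<delta>\<bar> powr (- (1 / (2 * b))))"
        unfolding eq div_0 minus_minus minus_zero by (rule X)
      show "bnd (\<lambda>t. Kf b (1 / c) (\<delta> / \<kappa>) t - Kf b (0 / c) (\<delta> / \<kappa>) t) {0<..} (CEs b * \<bar>\<delta>\<bar> powr (- (1 / (2 * b))))"
        by (rule bnd_cnj[OF X'])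
    qed
  qed
qed

lemma ln_le_2b: fixes b \<kappa> :: real assumes b: "b > 1" and k: "0 < \<kappa>"
  shows "ln \<kappa> / b \<le> 2 * \<kappa> powr (1 / (2 * b))"
proof -
  define e where "e = \<kappa> powr (1 / (2 * b))"
  have ep: "0 < e" unfolding e_def using k by simp
  have "ln e = ln \<kappa> / (2 * b)" unfolding e_def using k by (simp add: ln_powr)
  moreover have "ln e \<le> e - 1" using ep by (rule ln_le_minus_one)
  ultimately have "ln \<kappa> / (2 * b) \<le> e" by linarith
  hence "ln \<kappa> / b \<le> 2 * e" using b by (simp add: field_simps)
  thus ?thesis unfolding e_def .
qed

lemma D1_all:
  fixes b \<delta> :: real
  assumes b: "b > 1"
  shows "bnd (\<lambda>t. Kf b 1 \<delta> t - Kf b 1 0 t) {0<..} (C0 b * \<bar>\<delta>\<bar> powr (1 / (2 * b)))"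
proof (cases "\<bar>\<delta>\<bar> \<le> 1")
  case True
  have "CDs b * \<bar>\<delta>\<bar> powr (1 / (2 * b)) \<le> C0 b * \<bar>\<delta>\<bar> powr (1 / (2 * b))"
    using C0_ge[OF b] by (intro mult_right_mono) auto
  thus ?thesis using D1_small[OF b True] by (elim bnd_mono) auto
next
  case False
  define \<kappa> where "\<kappa> = \<bar>\<delta>\<bar>"
  have k: "1 < \<kappa>" "0 < \<kappa>" "\<delta> \<noteq> 0" using False unfolding \<kappa>_def by auto
  define e where "e = \<kappa> powr (1 / (2 * b))"
  have e1: "1 \<le> e" unfolding e_def using k b by (intro ge_one_powr_ge_zero) auto
  have em: "\<kappa> powr (- (1 / (2 * b))) \<le> 1"
    using e1 unfolding e_def powr_minus_divide by (simp add: divide_le_eq_1)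
  have B1: "bnd (\<lambda>t. Kf b 1 \<delta> t - Kf b 0 \<delta> t) {0<..} (CEs b * \<kappa> powr (- (1 / (2 * b))))"
    using E1_large[OF b] k unfolding \<kappa>_def by simp
  have B2: "bnd (\<lambda>t. Kf b 1 0 t - Kf b 0 \<delta> t) {0<..} (CF b + \<bar>ln \<kappa>\<bar> / b)"
    using F_bound[OF b k(3)] unfolding \<kappa>_def .
  have D: "bnd (\<lambda>t. (Kf b 1 \<delta> t - Kf b 0 \<delta> t) - (Kf b 1 0 t - Kf b 0 \<delta> t)) {0<..}
      (CEs b * \<kappa> powr (- (1 / (2 * b))) + (CF b + \<bar>ln \<kappa>\<bar> / b))"
    by (rule bnd_diff[OF Kf_cont2 Kf_cont2 _ B1 B2]) simp
  have "CEs b * \<kappa> powr (- (1 / (2 * b))) \<le> CEs b * e"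
    using CEs_pos[OF b] em e1 by (intro mult_left_mono) auto
  moreover have "CF b \<le> CF b * e" using CF_pos[OF b] e1 by simp
  moreover have "\<bar>ln \<kappa>\<bar> / b \<le> 2 * e" using ln_le_2b[OF b k(2)] k unfolding e_def by simp
  ultimately have "CEs b * \<kappa> powr (- (1 / (2 * b))) + (CF b + \<bar>ln \<kappa>\<bar> / b) \<le> (CEs b + CF b + 2) * e"
    by (simp add: algebra_simps)
  also have "\<dots> \<le> C0 b * e" unfolding C0_def using CDs_pos[OF b] e1 by (intro mult_right_mono) auto
  finally have le: "CEs b * \<kappa> powr (- (1 / (2 * b))) + (CF b + \<bar>ln \<kappa>\<bar> / b) \<le> C0 b * e" .
  have "bnd (\<lambda>t. Kf b 1 \<delta> t - Kf b 1 0 t) {0<..} (CEs b * \<kappa> powr (- (1 / (2 * b))) + (CF b + \<bar>ln \<kappa>\<bar> / b))"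
    by (rule bnd_cong[OF _ _ D]) auto
  thus ?thesis using le unfolding e_def \<kappa>_def by (elim bnd_mono) auto
qed

lemma E1_all:
  fixes b \<delta> :: real
  assumes b: "b > 1" and d: "\<delta> \<noteq> 0"
  shows "bnd (\<lambda>t. Kf b 1 \<delta> t - Kf b 0 \<delta> t) {0<..} (C0 b * \<bar>\<delta>\<bar> powr (- (1 / (2 * b))))"
proof (cases "1 \<le> \<bar>\<delta>\<bar>")
  case True
  have "CEs b * \<bar>\<delta>\<bar> powr (- (1 / (2 * b))) \<le> C0 b * \<bar>\<delta>\<bar> powr (- (1 / (2 * b)))"
    using C0_ge[OF b] by (intro mult_right_mono) auto
  thus ?thesis using E1_large[OF b True] by (elim bnd_mono) auto
next
  case False
  define \<kappa> where "\<kappa> = \<bar>\<delta>\<bar>"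
  have k: "\<kappa> < 1" "0 < \<kappa>" using False d unfolding \<kappa>_def by auto
  define E where "E = \<kappa> powr (- (1 / (2 * b)))"
  define e where "e = \<kappa> powr (1 / (2 * b))"
  have ep: "0 < e" unfolding e_def using k by simp
  have e1: "e \<le> 1" unfolding e_def using k b powr_mono2[of "1 / (2 * b)" \<kappa> 1] by simp
  have Ee: "E = 1 / e" unfolding E_def e_def by (rule powr_minus_divide)
  have E1: "1 \<le> E" unfolding Ee using e1 ep by (simp add: le_divide_eq)
  have B1: "bnd (\<lambda>t. Kf b 1 \<delta> t - Kf b 1 0 t) {0<..} (CDs b * \<kappa> powr (1 / (2 * b)))"
    using D1_small[OF b] k unfolding \<kappa>_def by simp
  have B2: "bnd (\<lambda>t. Kf b 1 0 t - Kf b 0 \<delta> t) {0<..} (CF b + \<bar>ln \<kappa>\<bar> / b)"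
    using F_bound[OF b d] unfolding \<kappa>_def .
  have D: "bnd (\<lambda>t. (Kf b 1 \<delta> t - Kf b 1 0 t) + (Kf b 1 0 t - Kf b 0 \<delta> t)) {0<..}
      (CDs b * \<kappa> powr (1 / (2 * b)) + (CF b + \<bar>ln \<kappa>\<bar> / b))"
    by (rule bnd_add[OF Kf_cont2 Kf_cont2 _ B1 B2]) simp
  have lnk: "\<bar>ln \<kappa>\<bar> / b \<le> 2 * E"
  proof -
    have "ln (1 / \<kappa>) / b \<le> 2 * (1 / \<kappa>) powr (1 / (2 * b))" using ln_le_2b[OF b] k by simp
    moreover have "(1 / \<kappa>) powr (1 / (2 * b)) = E" unfolding E_def using k
      by (simp add: powr_divide powr_minus_divide)
    moreover have "\<bar>ln \<kappa>\<bar> = ln (1 / \<kappa>)" using k by (simp add: ln_div)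
    ultimately show ?thesis by simp
  qed
  have "CDs b * e \<le> CDs b * E" using CDs_pos[OF b] e1 E1 by (intro mult_left_mono) auto
  moreover have "CF b \<le> CF b * E" using CF_pos[OF b] E1 by simp
  ultimately have "CDs b * e + (CF b + \<bar>ln \<kappa>\<bar> / b) \<le> (CDs b + CF b + 2) * E"
    using lnk by (simp add: algebra_simps)
  also have "\<dots> \<le> C0 b * E" unfolding C0_def using CEs_pos[OF b] E1 by (intro mult_right_mono) auto
  finally have le: "CDs b * e + (CF b + \<bar>ln \<kappa>\<bar> / b) \<le> C0 b * E" .
  have "bnd (\<lambda>t. Kf b 1 \<delta> t - Kf b 0 \<delta> t) {0<..} (CDs b * \<kappa> powr (1 / (2 * b)) + (CF b + \<bar>ln \<kappa>\<bar> / b))"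
    by (rule bnd_cong[OF _ _ D]) auto
  thus ?thesis using le unfolding E_def e_def \<kappa>_def by (elim bnd_mono) auto
qed

lemma DG_pos:
  fixes b \<alpha> \<gamma> :: real
  assumes b: "b > 1" and a: "\<alpha> > 0"
  shows "bnd (\<lambda>t. Kf b \<alpha> \<gamma> t - Kf b \<alpha> 0 t) {0<..} (C0 b * (\<bar>\<gamma>\<bar> / \<bar>\<alpha>\<bar> powr b) powr (1 / (2 * b)))"
proof (rule bnd_scale[OF a])
  show "{0<..} \<subseteq> ({0<..} :: real set)" by simp
  have img: "(\<lambda>t. \<alpha> * t) ` {0<..} = {0<..}" by (rule image_mult_pos[OF a])
  have X: "bnd (\<lambda>t. Kf b 1 (\<gamma> / \<alpha> powr b) t - Kf b 1 0 t) {0<..} (C0 b * \<bar>\<gamma> / \<alpha> powr b\<bar> powr (1 / (2 * b)))"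
    by (rule D1_all[OF b])
  have e: "\<bar>\<gamma> / \<alpha> powr b\<bar> = \<bar>\<gamma>\<bar> / \<bar>\<alpha>\<bar> powr b" using a by simp
  show "bnd (\<lambda>t. Kf b (\<alpha> / \<alpha>) (\<gamma> / \<alpha> powr b) t - Kf b (\<alpha> / \<alpha>) (0 / \<alpha> powr b) t) ((\<lambda>t. \<alpha> * t) ` {0<..})
     (C0 b * (\<bar>\<gamma>\<bar> / \<bar>\<alpha>\<bar> powr b) powr (1 / (2 * b)))"
    unfolding img div_0 using a X unfolding e by simp
qed

lemma DG:
  fixes b \<alpha> \<gamma> :: real
  assumes b: "b > 1" and a: "\<alpha> \<noteq> 0"
  shows "bnd (\<lambda>t. Kf b \<alpha> \<gamma> t - Kf b \<alpha> 0 t) {0<..} (C0 b * (\<bar>\<gamma>\<bar> / \<bar>\<alpha>\<bar> powr b) powr (1 / (2 * b)))"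
proof (cases "\<alpha> > 0")
  case True thus ?thesis by (rule DG_pos[OF b])
next
  case False
  hence "- \<alpha> > 0" using a by simp
  from DG_pos[OF b this, of "- \<gamma>"]
  have "bnd (\<lambda>t. Kf b (- \<alpha>) (- \<gamma>) t - Kf b (- \<alpha>) (- 0) t) {0<..} (C0 b * (\<bar>\<gamma>\<bar> / \<bar>\<alpha>\<bar> powr b) powr (1 / (2 * b)))"
    by (simp only: abs_minus_cancel minus_zero)
  thus ?thesis by (rule bnd_cnj)
qed

lemma EG_pos:
  fixes b \<alpha> \<gamma> :: real
  assumes b: "b > 1" and a: "\<alpha> > 0" and g: "\<gamma> \<noteq> 0"
  shows "bnd (\<lambda>t. Kf b \<alpha> \<gamma> t - Kf b 0 \<gamma> t) {0<..} (C0 b * (\<bar>\<alpha>\<bar> powr b / \<bar>\<gamma>\<bar>) powr (1 / (2 * b)))"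
proof (rule bnd_scale[OF a])
  show "{0<..} \<subseteq> ({0<..} :: real set)" by simp
  have img: "(\<lambda>t. \<alpha> * t) ` {0<..} = {0<..}" by (rule image_mult_pos[OF a])
  have d: "\<gamma> / \<alpha> powr b \<noteq> 0" using a g by simp
  have X: "bnd (\<lambda>t. Kf b 1 (\<gamma> / \<alpha> powr b) t - Kf b 0 (\<gamma> / \<alpha> powr b) t) {0<..} (C0 b * \<bar>\<gamma> / \<alpha> powr b\<bar> powr (- (1 / (2 * b))))"
    by (rule E1_all[OF b d])
  have e: "\<bar>\<gamma> / \<alpha> powr b\<bar> powr (- (1 / (2 * b))) = (\<bar>\<alpha>\<bar> powr b / \<bar>\<gamma>\<bar>) powr (1 / (2 * b))"
  proof -
    have "\<bar>\<gamma> / \<alpha> powr b\<bar> powr (- (1 / (2 * b))) = 1 / \<bar>\<gamma> / \<alpha> powr b\<bar> powr (1 / (2 * b))"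
      by (rule powr_minus_divide)
    also have "\<dots> = (1 / \<bar>\<gamma> / \<alpha> powr b\<bar>) powr (1 / (2 * b))" by (simp add: powr_divide)
    also have "1 / \<bar>\<gamma> / \<alpha> powr b\<bar> = \<bar>\<alpha>\<bar> powr b / \<bar>\<gamma>\<bar>" using a by simp
    finally show ?thesis .
  qed
  show "bnd (\<lambda>t. Kf b (\<alpha> / \<alpha>) (\<gamma> / \<alpha> powr b) t - Kf b (0 / \<alpha>) (\<gamma> / \<alpha> powr b) t) ((\<lambda>t. \<alpha> * t) ` {0<..})
     (C0 b * (\<bar>\<alpha>\<bar> powr b / \<bar>\<gamma>\<bar>) powr (1 / (2 * b)))"
    unfolding img div_0 using a X unfolding e by simp
qed

lemma EG:
  fixes b \<alpha> \<gamma> :: real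
  assumes b: "b > 1" and g: "\<gamma> \<noteq> 0"
  shows "bnd (\<lambda>t. Kf b \<alpha> \<gamma> t - Kf b 0 \<gamma> t) {0<..} (C0 b * (\<bar>\<alpha>\<bar> powr b / \<bar>\<gamma>\<bar>) powr (1 / (2 * b)))"
proof (cases "\<alpha> = 0")
  case True
  have "0 \<le> C0 b * (\<bar>\<alpha>\<bar> powr b / \<bar>\<gamma>\<bar>) powr (1 / (2 * b))" using C0_ge[OF b] by simp
  thus ?thesis using True bnd_zero_fun[of "{0<..}"] by simp
next
  case False
  show ?thesis
  proof (cases "\<alpha> > 0")
    case True thus ?thesis by (rule EG_pos[OF b _ g])
  next
    case False
    hence "- \<alpha> > 0" using \<open>\<alpha> \<noteq> 0\<close> by simp
    from EG_pos[OF b this, of "- \<gamma>"] g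
    have "bnd (\<lambda>t. Kf b (- \<alpha>) (- \<gamma>) t - Kf b (- 0) (- \<gamma>) t) {0<..} (C0 b * (\<bar>\<alpha>\<bar> powr b / \<bar>\<gamma>\<bar>) powr (1 / (2 * b)))"
      by (simp only: abs_minus_cancel minus_zero neg_equal_0_iff_equal simp_thms)
    thus ?thesis by (rule bnd_cnj)
  qed
qed

definition tail0 :: "(real \<Rightarrow> complex) \<Rightarrow> bool" where
  "tail0 f \<longleftrightarrow> (\<forall>e>0. \<exists>a>0. bnd f {0<..a} e)"

definition tailinf :: "(real \<Rightarrow> complex) \<Rightarrow> bool" where
  "tailinf f \<longleftrightarrow> (\<forall>e>0. \<exists>A>0. bnd f {A..} e)"

lemma tail0_Kf:
  assumes b: "b > 1"
  shows "tail0 (\<lambda>t. Kf b \<alpha> \<gamma> t - Kf b \<alpha>' \<gamma>' t)"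
  unfolding tail0_def
proof (intro allI impI)
  fix e :: real assume e: "e > 0"
  define M where "M = \<bar>\<alpha> - \<alpha>'\<bar> + \<bar>\<gamma> - \<gamma>'\<bar>"
  have M0: "0 \<le> M" unfolding M_def by simp
  define a where "a = min 1 (e / (M + 1))"
  have ap: "0 < a" unfolding a_def using e M0 by simp
  have a1: "a \<le> 1" unfolding a_def by simp
  have pa: "a powr (b - 1) \<le> 1" using ap a1 b powr_mono2[of "b - 1" a 1] by simp
  have "(\<bar>\<alpha> - \<alpha>'\<bar> + \<bar>\<gamma> - \<gamma>'\<bar> * a powr (b - 1)) * a \<le> M * a"
    unfolding M_def using pa ap by (intro mult_right_mono) (auto simp: mult_left_le)
  also have "\<dots> \<le> M * (e / (M + 1))" unfolding a_def using M0 by (intro mult_left_mono) auto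
  also have "\<dots> \<le> e" using M0 e by (simp add: field_simps)
  finally have le: "(\<bar>\<alpha> - \<alpha>'\<bar> + \<bar>\<gamma> - \<gamma>'\<bar> * a powr (b - 1)) * a \<le> e" .
  show "\<exists>a>0. bnd (\<lambda>t. Kf b \<alpha> \<gamma> t - Kf b \<alpha>' \<gamma>' t) {0<..a} e"
    using bnd_small[OF b ap, of \<alpha> \<gamma> \<alpha>' \<gamma>'] le ap by (meson bnd_mono order_refl)
qed

lemma tailinf_Kf:
  assumes b: "b > 1" and ne: "\<alpha> \<noteq> 0 \<or> \<gamma> \<noteq> 0"
  shows "tailinf (Kf b \<alpha> \<gamma>)"
  unfolding tailinf_def
proof (intro allI impI)
  fix e :: real assume e: "e > 0"
  show "\<exists>A>0. bnd (Kf b \<alpha> \<gamma>) {A..} e"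
  proof (cases "\<gamma> = 0")
    case True
    hence a: "\<alpha> \<noteq> 0" using ne by simp
    define A where "A = 4 / (\<bar>\<alpha>\<bar> * e)"
    have Ap: "0 < A" unfolding A_def using a e by simp
    have "bnd (Kf b \<alpha> \<gamma>) {A..} (4 / (\<bar>\<alpha>\<bar> * A))" by (rule C_lin[OF b a _ Ap]) (simp add: True)
    moreover have "4 / (\<bar>\<alpha>\<bar> * A) = e" unfolding A_def using a e by (simp add: field_simps)
    ultimately show ?thesis using Ap by auto
  next
    case False
    define A where "A = max 1 (max ((\<bar>\<alpha>\<bar> / \<bar>\<gamma>\<bar>) powr (1 / (b - 1))) (4 / ((b - 1) * \<bar>\<gamma>\<bar> * e)))"
    have A1: "1 \<le> A" unfolding A_def by simp
    have Ap: "0 < A" using A1 by simp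
    have far: "\<bar>\<alpha>\<bar> \<le> \<bar>\<gamma>\<bar> * A powr (b - 1)"
    proof -
      have "(\<bar>\<alpha>\<bar> / \<bar>\<gamma>\<bar>) powr (1 / (b - 1)) \<le> A" unfolding A_def
        by (rule order_trans[OF max.cobounded1 max.cobounded2])
      hence "((\<bar>\<alpha>\<bar> / \<bar>\<gamma>\<bar>) powr (1 / (b - 1))) powr (b - 1) \<le> A powr (b - 1)"
        using b by (intro powr_mono2) auto
      moreover have "((\<bar>\<alpha>\<bar> / \<bar>\<gamma>\<bar>) powr (1 / (b - 1))) powr (b - 1) = \<bar>\<alpha>\<bar> / \<bar>\<gamma>\<bar>"
        using b by (simp add: powr_powr)
      ultimately have "\<bar>\<alpha>\<bar> / \<bar>\<gamma>\<bar> \<le> A powr (b - 1)" by simp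
      thus ?thesis using False by (simp add: divide_le_eq mult.commute)
    qed
    have B: "bnd (Kf b \<alpha> \<gamma>) {A..} (4 / ((b - 1) * \<bar>\<gamma>\<bar> * A powr b))" by (rule C_far[OF b False Ap far])
    have "A \<le> A powr b" using A1 b powr_mono[of 1 b A] by simp
    hence "4 / ((b - 1) * \<bar>\<gamma>\<bar> * A powr b) \<le> 4 / ((b - 1) * \<bar>\<gamma>\<bar> * A)"
      using Ap b False by (intro divide_left_mono mult_left_mono mult_pos_pos) auto
    also have "\<dots> \<le> e"
    proof -
      have "4 / ((b - 1) * \<bar>\<gamma>\<bar> * e) \<le> A" unfolding A_def
        by (rule order_trans[OF max.cobounded2 max.cobounded2])
      thus ?thesis using b False e Ap by (simp add: field_simps)
    qed
    finally show ?thesis using B Ap by (meson bnd_mono order_refl)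
  qed
qed

lemma tailinf_diff:
  assumes "continuous_on {0<..} f" "continuous_on {0<..} g" "tailinf f" "tailinf g"
  shows "tailinf (\<lambda>t. f t - g t)"
  unfolding tailinf_def
proof (intro allI impI)
  fix e :: real assume e: "e > 0"
  obtain A1 where A1: "A1 > 0" "bnd f {A1..} (e/2)" using assms(3) e unfolding tailinf_def by (meson half_gt_zero)
  obtain A2 where A2: "A2 > 0" "bnd g {A2..} (e/2)" using assms(4) e unfolding tailinf_def by (meson half_gt_zero)
  define A where "A = max A1 A2"
  have "bnd f {A..} (e/2)" "bnd g {A..} (e/2)" using A1 A2 unfolding A_def by (auto elim!: bnd_mono)
  hence "bnd (\<lambda>t. f t - g t) {A..} (e/2 + e/2)"
    by (intro bnd_diff assms(1,2)) (use A1 A_def in auto)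
  thus "\<exists>A>0. bnd (\<lambda>t. f t - g t) {A..} e" using A1 unfolding A_def by (intro exI[of _ A]) (auto simp: A_def)
qed

abbreviation FF :: "(real \<times> real) filter" where "FF \<equiv> at_right 0 \<times>\<^sub>F at_top"

lemma FF_nbot: "FF \<noteq> bot"
  by (simp add: prod_filter_eq_bot trivial_limit_at_right_real)

lemma FF_ev: "eventually (\<lambda>x. 0 < fst x \<and> fst x < a \<and> q < snd x) FF" if "0 < a" for a q :: real
proof -
  have "eventually (\<lambda>x. x \<in> {0<..<a}) (at_right (0::real))" by (rule eventually_at_right_real[OF that])
  moreover have "eventually (\<lambda>R. q < R) (at_top :: real filter)" by (rule eventually_gt_at_top)
  ultimately have "eventually (\<lambda>x. fst x \<in> {0<..<a} \<and> q < snd x) FF" by (rule eventually_prodI)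
  thus ?thesis by (rule eventually_mono) auto
qed

lemma FF_ev01: "eventually (\<lambda>x. 0 < fst x \<and> fst x \<le> snd x) FF"
  using FF_ev[of 1 1] by (rule eventually_mono) auto

lemma int3:
  fixes f :: "real \<Rightarrow> complex"
  assumes cont: "continuous_on {0<..} f" and o: "0 < e1" "e1 \<le> a" "a \<le> q" "q \<le> R"
  shows "integral {e1..R} f = integral {e1..a} f + integral {a..q} f + integral {q..R} f"
proof -
  have i: "f integrable_on {e1..R}" by (rule cont_int[OF cont o(1)])
  have ia: "f integrable_on {a..R}" using o by (intro cont_int[OF cont]) auto
  have "integral {e1..a} f + integral {a..R} f = integral {e1..R} f"
    by (rule Henstock_Kurzweil_Integration.integral_combine) (use o i in auto)
  moreover have "integral {a..q} f + integral {q..R} f = integral {a..R} f"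
    by (rule Henstock_Kurzweil_Integration.integral_combine) (use o ia in auto)
  ultimately show ?thesis by (simp add: add.assoc)
qed

lemma conv_exists:
  fixes f :: "real \<Rightarrow> complex"
  assumes cont: "continuous_on {0<..} f" and t0: "tail0 f" and ti: "tailinf f"
  shows "\<exists>L. ((\<lambda>(eps, R). integral {eps..R} f) \<longlongrightarrow> L) FF"
proof -
  define I where "I = (\<lambda>(eps::real, R::real). integral {eps..R} f)"
  have cauchy: "cauchy_filter (filtermap I FF)"
    unfolding cauchy_filter_metric_filtermap
  proof (intro allI impI)
    fix e :: real assume e: "e > 0"
    obtain a where a: "a > 0" "bnd f {0<..a} (e/5)" using t0 e unfolding tail0_def by (meson zero_less_divide_iff zero_less_numeral)
    obtain A where A: "A > 0" "bnd f {A..} (e/5)" using ti e unfolding tailinf_def by (meson zero_less_divide_iff zero_less_numeral)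
    define q where "q = max A a"
    define P where "P = (\<lambda>x::real\<times>real. 0 < fst x \<and> fst x < a \<and> q < snd x)"
    have evP: "eventually P FF" unfolding P_def by (rule FF_ev[OF a(1)])
    have key: "dist (I x) (I y) < e" if "P x" "P y" for x y
    proof -
      obtain e1 R1 where x: "x = (e1, R1)" by force
      obtain e2 R2 where y: "y = (e2, R2)" by force
      have c1: "0 < e1" "e1 \<le> a" "a \<le> q" "q \<le> R1" using that(1) unfolding P_def x q_def by auto
      have c2: "0 < e2" "e2 \<le> a" "a \<le> q" "q \<le> R2" using that(2) unfolding P_def y q_def by auto
      have eq: "I x - I y = (integral {e1..a} f - integral {e2..a} f) + (integral {q..R1} f - integral {q..R2} f)"
        unfolding x y I_def using int3[OF cont c1] int3[OF cont c2] by simp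
      have n1: "cmod (integral {e1..a} f) \<le> e/5" "cmod (integral {e2..a} f) \<le> e/5"
        using a(2) c1 c2 a(1) unfolding bnd_def by auto
      have n2: "cmod (integral {q..R1} f) \<le> e/5" "cmod (integral {q..R2} f) \<le> e/5"
        using A(2) c1 c2 unfolding bnd_def q_def by auto
      have m1: "cmod (integral {e1..a} f - integral {e2..a} f) \<le> e/5 + e/5"
        by (rule norm_diff_le[OF refl n1])
      have m2: "cmod (integral {q..R1} f - integral {q..R2} f) \<le> e/5 + e/5"
        by (rule norm_diff_le[OF refl n2])
      have "cmod (I x - I y) \<le> (e/5 + e/5) + (e/5 + e/5)"
        by (rule norm_sum_le[OF eq m1 m2])
      thus ?thesis using e by (simp add: dist_norm)
    qed
    show "\<exists>P. eventually P FF \<and> (\<forall>x y. P x \<and> P y \<longrightarrow> dist (I x) (I y) < e)"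
      using evP key by blast
  qed
  obtain c where "filtermap I FF \<le> nhds c"
    using cauchy_filter_complete_converges[OF cauchy complete_UNIV] FF_nbot
    by (auto simp: filtermap_bot_iff)
  hence "(I \<longlongrightarrow> c) FF" by (simp add: filterlim_def)
  thus ?thesis unfolding I_def by blast
qed

lemma conv_bnd:
  fixes f :: "real \<Rightarrow> complex"
  assumes lim: "((\<lambda>(eps, R). integral {eps..R} f) \<longlongrightarrow> L) FF" and B: "bnd f {0<..} B"
  shows "cmod L \<le> B"
proof -
  have "((\<lambda>x. cmod ((\<lambda>(eps, R). integral {eps..R} f) x)) \<longlongrightarrow> cmod L) FF"
    by (rule tendsto_norm[OF lim])
  moreover have "eventually (\<lambda>x. cmod ((\<lambda>(eps, R). integral {eps..R} f) x) \<le> B) FF"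
    using FF_ev01 by (rule eventually_mono) (use B in \<open>auto simp: bnd_def split: prod.splits\<close>)
  ultimately show ?thesis by (rule tendsto_upperbound[OF _ _ FF_nbot])
qed

definition Gf :: "real \<Rightarrow> real \<Rightarrow> real \<Rightarrow> real \<Rightarrow> real \<Rightarrow> real \<Rightarrow> complex" where
  "Gf b cp cm x1 x2 = (\<lambda>t. Kf b x1 (cp * x2) t - Kf b (- x1) (cm * x2) t)"

lemma trunc_eq:
  assumes "0 < eps" "eps \<le> R"
  shows "mult_trunc b cp cm x1 x2 eps R = integral {eps..R} (Gf b cp cm x1 x2)"
proof -
  have f1: "(\<lambda>t. cis (- (t * x1 + cp * t powr b * x2)) / complex_of_real t) = Kf b x1 (cp * x2)"
    by (auto simp: Kf_def fun_eq_iff mult_ac)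
  define g where "g = (\<lambda>s. - Kf b (- x1) (cm * x2) s)"
  have f2: "(\<lambda>t. cis (- (t * x1 + cm * (- t) powr b * x2)) / complex_of_real t) = (\<lambda>t. g (- t))"
    by (auto simp: g_def Kf_def fun_eq_iff mult_ac)
  have "integral {- R..- eps} (\<lambda>t. g (- t)) = integral {eps..R} g" using integral_reflect_real[of R eps g] by simp
  also have "\<dots> = - integral {eps..R} (Kf b (- x1) (cm * x2))" unfolding g_def by (rule integral_neg)
  finally have I2: "integral {- R..- eps} (\<lambda>t. cis (- (t * x1 + cm * (- t) powr b * x2)) / complex_of_real t)
      = - integral {eps..R} (Kf b (- x1) (cm * x2))" unfolding f2 .
  have "integral {eps..R} (Gf b cp cm x1 x2) = integral {eps..R} (Kf b x1 (cp * x2)) - integral {eps..R} (Kf b (- x1) (cm * x2))"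
    unfolding Gf_def by (intro integral_diff cont_int[OF Kf_cont] assms(1))
  thus ?thesis unfolding mult_trunc_def f1 I2 by simp
qed

lemma Gf_conv:
  assumes b: "b > 1" and cp: "cp \<noteq> 0" and cm: "cm \<noteq> 0"
  shows "\<exists>L. ((\<lambda>(eps, R). integral {eps..R} (Gf b cp cm x1 x2)) \<longlongrightarrow> L) FF"
proof (cases "x1 = 0 \<and> x2 = 0")
  case True
  have "Gf b cp cm x1 x2 = (\<lambda>t. 0)" unfolding Gf_def using True by auto
  hence "(\<lambda>(eps, R). integral {eps..R} (Gf b cp cm x1 x2)) = (\<lambda>_. 0)" by auto
  thus ?thesis by auto
next
  case False
  have n1: "x1 \<noteq> 0 \<or> cp * x2 \<noteq> 0" using False cp by auto
  have n2: "- x1 \<noteq> 0 \<or> cm * x2 \<noteq> 0" using False cm by auto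
  show ?thesis unfolding Gf_def
    by (rule conv_exists[OF Kf_cont2 tail0_Kf[OF b] tailinf_diff[OF Kf_cont Kf_cont tailinf_Kf[OF b n1] tailinf_Kf[OF b n2]]])
qed

lemma m_eq:
  assumes "((\<lambda>(eps, R). integral {eps..R} (Gf b cp cm x1 x2)) \<longlongrightarrow> L) FF"
  shows "mult_m b cp cm x1 x2 = L"
proof -
  have "eventually (\<lambda>x. (\<lambda>(eps, R). mult_trunc b cp cm x1 x2 eps R) x = (\<lambda>(eps, R). integral {eps..R} (Gf b cp cm x1 x2)) x) FF"
    using FF_ev01 by (rule eventually_mono) (auto simp: trunc_eq split: prod.splits)
  hence "((\<lambda>(eps, R). mult_trunc b cp cm x1 x2 eps R) \<longlongrightarrow> L) FF"
    using assms by (simp add: tendsto_cong)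
  thus ?thesis unfolding mult_m_def by (rule tendsto_Lim[OF FF_nbot])
qed

lemma diff_bound:
  fixes f g :: "real \<Rightarrow> complex"
  assumes cf: "continuous_on {0<..} f" and cg: "continuous_on {0<..} g"
    and l1: "((\<lambda>(eps, R). integral {eps..R} f) \<longlongrightarrow> L1) FF"
    and l2: "((\<lambda>(eps, R). integral {eps..R} g) \<longlongrightarrow> L2) FF"
    and B: "bnd (\<lambda>t. f t - g t) {0<..} B"
  shows "cmod (L1 - L2) \<le> B"
proof -
  have "((\<lambda>x. (\<lambda>(eps, R). integral {eps..R} f) x - (\<lambda>(eps, R). integral {eps..R} g) x) \<longlongrightarrow> L1 - L2) FF"
    by (rule tendsto_diff[OF l1 l2])
  moreover have "eventually (\<lambda>x. (\<lambda>(eps, R). integral {eps..R} f) x - (\<lambda>(eps, R). integral {eps..R} g) x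
       = (\<lambda>(eps, R). integral {eps..R} (\<lambda>t. f t - g t)) x) FF"
    using FF_ev01 by (rule eventually_mono)
      (auto split: prod.splits intro!: integral_diff[symmetric] cont_int[OF cf] cont_int[OF cg])
  ultimately have "((\<lambda>(eps, R). integral {eps..R} (\<lambda>t. f t - g t)) \<longlongrightarrow> L1 - L2) FF"
    by (simp add: tendsto_cong)
  thus ?thesis using B by (rule conv_bnd)
qed

lemma Gf_cont: "continuous_on {0<..} (Gf b cp cm x1 x2)"
  unfolding Gf_def by (rule Kf_cont2)

theorem lemma8p3:
  fixes b cp cm :: real
  assumes "b > 1" and "cp \<noteq> 0" and "cm \<noteq> 0"
  shows "\<exists>C\<ge>1. \<forall>x1 x2 :: real.
     (x1 \<noteq> 0 \<longrightarrow> cmod (mult_m b cp cm x1 x2 - mult_m b cp cm x1 0)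
        \<le> C * (\<bar>x2\<bar> / \<bar>x1\<bar> powr b) powr (1 / (2 * b))) \<and>
     (x2 \<noteq> 0 \<longrightarrow> cmod (mult_m b cp cm x1 x2 - mult_m b cp cm 0 x2)
        \<le> C * (\<bar>x1\<bar> powr b / \<bar>x2\<bar>) powr (1 / (2 * b)))"
proof -
  note b = assms(1) and cp = assms(2) and cm = assms(3)
  define a where "a = 1 / (2 * b)"
  define K where "K = \<bar>cp\<bar> powr a + \<bar>cm\<bar> powr a + \<bar>cp\<bar> powr (- a) + \<bar>cm\<bar> powr (- a)"
  define C where "C = 1 + C0 b * K"
  have C0p: "0 \<le> C0 b" using C0_ge[OF b] by simp
  have Kp: "0 \<le> K" unfolding K_def by simp
  have C1: "1 \<le> C" unfolding C_def using C0p Kp by simp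
  have lim: "\<exists>L. ((\<lambda>(eps, R). integral {eps..R} (Gf b cp cm x1 x2)) \<longlongrightarrow> L) FF" for x1 x2
    by (rule Gf_conv[OF b cp cm])
  have part1: "cmod (mult_m b cp cm x1 x2 - mult_m b cp cm x1 0) \<le> C * (\<bar>x2\<bar> / \<bar>x1\<bar> powr b) powr a"
    if x1: "x1 \<noteq> 0" for x1 x2
  proof -
    obtain L1 where L1: "((\<lambda>(eps, R). integral {eps..R} (Gf b cp cm x1 x2)) \<longlongrightarrow> L1) FF" using lim by blast
    obtain L2 where L2: "((\<lambda>(eps, R). integral {eps..R} (Gf b cp cm x1 0)) \<longlongrightarrow> L2) FF" using lim by blast
    define r where "r = (\<bar>x2\<bar> / \<bar>x1\<bar> powr b) powr a"
    have r0: "0 \<le> r" unfolding r_def by simp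
    have e1: "(\<bar>cp * x2\<bar> / \<bar>x1\<bar> powr b) powr a = \<bar>cp\<bar> powr a * r"
    proof -
      have h: "\<bar>cp * x2\<bar> / \<bar>x1\<bar> powr b = \<bar>cp\<bar> * (\<bar>x2\<bar> / \<bar>x1\<bar> powr b)" by (simp add: abs_mult)
      show ?thesis unfolding r_def h by (rule powr_mult)
    qed
    have e2: "(\<bar>cm * x2\<bar> / \<bar>- x1\<bar> powr b) powr a = \<bar>cm\<bar> powr a * r"
    proof -
      have h: "\<bar>cm * x2\<bar> / \<bar>- x1\<bar> powr b = \<bar>cm\<bar> * (\<bar>x2\<bar> / \<bar>x1\<bar> powr b)" by (simp add: abs_mult)
      show ?thesis unfolding r_def h by (rule powr_mult)
    qed
    have B1: "bnd (\<lambda>t. Kf b x1 (cp * x2) t - Kf b x1 0 t) {0<..} (C0 b * (\<bar>cp\<bar> powr a * r))"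
      using DG[OF b x1, of "cp * x2"] unfolding a_def[symmetric] e1 .
    have x1': "- x1 \<noteq> 0" using x1 by simp
    have B2: "bnd (\<lambda>t. Kf b (- x1) (cm * x2) t - Kf b (- x1) 0 t) {0<..} (C0 b * (\<bar>cm\<bar> powr a * r))"
      using DG[OF b x1', of "cm * x2"] unfolding a_def[symmetric] e2 .
    have B: "bnd (\<lambda>t. (Kf b x1 (cp * x2) t - Kf b x1 0 t) - (Kf b (- x1) (cm * x2) t - Kf b (- x1) 0 t)) {0<..}
        (C0 b * (\<bar>cp\<bar> powr a * r) + C0 b * (\<bar>cm\<bar> powr a * r))"
      by (rule bnd_diff[OF Kf_cont2 Kf_cont2 _ B1 B2]) simp
    have B': "bnd (\<lambda>t. Gf b cp cm x1 x2 t - Gf b cp cm x1 0 t) {0<..} (C0 b * (\<bar>cp\<bar> powr a * r) + C0 b * (\<bar>cm\<bar> powr a * r))"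
      by (rule bnd_cong[OF _ _ B]) (auto simp: Gf_def)
    have "cmod (L1 - L2) \<le> C0 b * (\<bar>cp\<bar> powr a * r) + C0 b * (\<bar>cm\<bar> powr a * r)"
      by (rule diff_bound[OF Gf_cont Gf_cont L1 L2 B'])
    also have "\<dots> = C0 b * (\<bar>cp\<bar> powr a + \<bar>cm\<bar> powr a) * r" by (simp add: algebra_simps)
    also have "\<dots> \<le> C * r"
    proof (intro mult_right_mono r0)
      have "\<bar>cp\<bar> powr a + \<bar>cm\<bar> powr a \<le> K" unfolding K_def by simp
      hence "C0 b * (\<bar>cp\<bar> powr a + \<bar>cm\<bar> powr a) \<le> C0 b * K" using C0p by (rule mult_left_mono)
      thus "C0 b * (\<bar>cp\<bar> powr a + \<bar>cm\<bar> powr a) \<le> C" unfolding C_def by simp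
    qed
    finally show ?thesis using m_eq[OF L1] m_eq[OF L2] unfolding r_def by simp
  qed
  have part2: "cmod (mult_m b cp cm x1 x2 - mult_m b cp cm 0 x2) \<le> C * (\<bar>x1\<bar> powr b / \<bar>x2\<bar>) powr a"
    if x2: "x2 \<noteq> 0" for x1 x2
  proof -
    obtain L1 where L1: "((\<lambda>(eps, R). integral {eps..R} (Gf b cp cm x1 x2)) \<longlongrightarrow> L1) FF" using lim by blast
    obtain L2 where L2: "((\<lambda>(eps, R). integral {eps..R} (Gf b cp cm 0 x2)) \<longlongrightarrow> L2) FF" using lim by blast
    define r where "r = (\<bar>x1\<bar> powr b / \<bar>x2\<bar>) powr a"
    have r0: "0 \<le> r" unfolding r_def by simp
    have e1: "(\<bar>x1\<bar> powr b / \<bar>cp * x2\<bar>) powr a = \<bar>cp\<bar> powr (- a) * r"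
    proof -
      have h: "\<bar>x1\<bar> powr b / \<bar>cp * x2\<bar> = (1 / \<bar>cp\<bar>) * (\<bar>x1\<bar> powr b / \<bar>x2\<bar>)" by (simp add: abs_mult)
      have "(\<bar>x1\<bar> powr b / \<bar>cp * x2\<bar>) powr a = (1 / \<bar>cp\<bar>) powr a * r" unfolding r_def h
        by (rule powr_mult)
      also have "(1 / \<bar>cp\<bar>) powr a = \<bar>cp\<bar> powr (- a)" by (simp add: powr_minus_divide powr_divide)
      finally show ?thesis .
    qed
    have e2: "(\<bar>- x1\<bar> powr b / \<bar>cm * x2\<bar>) powr a = \<bar>cm\<bar> powr (- a) * r"
    proof -
      have h: "\<bar>- x1\<bar> powr b / \<bar>cm * x2\<bar> = (1 / \<bar>cm\<bar>) * (\<bar>x1\<bar> powr b / \<bar>x2\<bar>)" by (simp add: abs_mult)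
      have "(\<bar>- x1\<bar> powr b / \<bar>cm * x2\<bar>) powr a = (1 / \<bar>cm\<bar>) powr a * r" unfolding r_def h
        by (rule powr_mult)
      also have "(1 / \<bar>cm\<bar>) powr a = \<bar>cm\<bar> powr (- a)" by (simp add: powr_minus_divide powr_divide)
      finally show ?thesis .
    qed
    have g1: "cp * x2 \<noteq> 0" using cp x2 by simp
    have g2: "cm * x2 \<noteq> 0" using cm x2 by simp
    have B1: "bnd (\<lambda>t. Kf b x1 (cp * x2) t - Kf b 0 (cp * x2) t) {0<..} (C0 b * (\<bar>cp\<bar> powr (- a) * r))"
      using EG[OF b g1, of x1] unfolding a_def[symmetric] e1 .
    have B2: "bnd (\<lambda>t. Kf b (- x1) (cm * x2) t - Kf b 0 (cm * x2) t) {0<..} (C0 b * (\<bar>cm\<bar> powr (- a) * r))"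
      using EG[OF b g2, of "- x1"] unfolding a_def[symmetric] e2 .
    have B: "bnd (\<lambda>t. (Kf b x1 (cp * x2) t - Kf b 0 (cp * x2) t) - (Kf b (- x1) (cm * x2) t - Kf b 0 (cm * x2) t)) {0<..}
        (C0 b * (\<bar>cp\<bar> powr (- a) * r) + C0 b * (\<bar>cm\<bar> powr (- a) * r))"
      by (rule bnd_diff[OF Kf_cont2 Kf_cont2 _ B1 B2]) simp
    have B': "bnd (\<lambda>t. Gf b cp cm x1 x2 t - Gf b cp cm 0 x2 t) {0<..} (C0 b * (\<bar>cp\<bar> powr (- a) * r) + C0 b * (\<bar>cm\<bar> powr (- a) * r))"
      by (rule bnd_cong[OF _ _ B]) (auto simp: Gf_def)
    have "cmod (L1 - L2) \<le> C0 b * (\<bar>cp\<bar> powr (- a) * r) + C0 b * (\<bar>cm\<bar> powr (- a) * r)"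
      by (rule diff_bound[OF Gf_cont Gf_cont L1 L2 B'])
    also have "\<dots> = C0 b * (\<bar>cp\<bar> powr (- a) + \<bar>cm\<bar> powr (- a)) * r" by (simp add: algebra_simps)
    also have "\<dots> \<le> C * r"
    proof (intro mult_right_mono r0)
      have "\<bar>cp\<bar> powr (- a) + \<bar>cm\<bar> powr (- a) \<le> K" unfolding K_def by simp
      hence "C0 b * (\<bar>cp\<bar> powr (- a) + \<bar>cm\<bar> powr (- a)) \<le> C0 b * K" using C0p by (rule mult_left_mono)
      thus "C0 b * (\<bar>cp\<bar> powr (- a) + \<bar>cm\<bar> powr (- a)) \<le> C" unfolding C_def by simp
    qed
    finally show ?thesis using m_eq[OF L1] m_eq[OF L2] unfolding r_def by simp
  qed
  show ?thesis
    using C1 part1 part2 unfolding a_def by blast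
qed

end
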